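(* For every fixed $k,K\in\mathbf{N}$, the set $\{\pi\in S:\ \mathrm{al}(\pi)<K\ \&\ s_k(\pi)<K\}$ is well partially ordered by $\prec$.
   Context: $S_n$ is the set of permutations of $[n]$, $S=\bigcup_n S_n$; $\pi\prec\rho$ means $\rho$ has a subsequence order-isomorphic to $\pi$; $\pi|A$ is the permutation order-isomorphic to the subsequence of $\pi$ at positions in $A$. A partial order is a well partial order if it has no infinite strictly descending chains and no infinite antichains. Alternating: $\sigma(\{1,3,5,\dots\})>\sigma(\{2,4,6,\dots\})$. $\mathrm{al}(\pi)$ is the maximum length of an alternating $\sigma$ with $\sigma\prec\pi$ or $\sigma\prec\pi^{-1}$. For $\sigma\in S_n,\tau\in S_m$, $\sigma\oplus\tau\in S_{n+m}$ equals $\sigma(i)$ at $i\le n$ and $n+\tau(i-n)$ at $i>n$; $\sigma\ominus\tau$ equals $m+\sigma(i)$ at $i\le n$ and $\tau(i-n)$ at $i>n$. Up-(down-)indecomposable means not of the form $\sigma\oplus\tau$ ($\sigma\ominus\tau$) with both nonempty; $h^+(\pi)$ ($h^-(\pi)$) is the maximum length of a block in the unique decomposition of $\pi$ as a $\oplus$-sum of up-indecomposables ($\ominus$-sum of down-indecomposables). $H_k^\pm=\{\pi\in S:h^\pm(\pi)<k\}$. For $k\ge2$ and $\pi\in S_n$, $s_k(\pi)$ is the number $r$ of intervals in the greedy partition $I_1<\dots<I_r$ of $[n]$ where $I_1$ is the longest initial interval with $\pi|I_1\in H_k^+\cup H_k^-$, $I_2$ the longest following interval with $\pi|I_2\in H_k^+\cup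 H_k^-$, etc.; $s_1(\pi)=\infty$ by convention. *)

theory Defs
  imports Main "HOL-Library.Sublist" "HOL-Library.Extended_Nat"
begin

text \<open>Permutations of [n] are represented 0-based as lists: a list p is a permutation
of length n iff it is distinct and its entries are exactly 0,...,n-1.
Position i (0-based) of the list holds the value pi(i+1)-1.\<close>

definition is_perm :: "nat list \<Rightarrow> bool" where
  "is_perm p \<longleftrightarrow> distinct p \<and> set p = {0..<length p}"

definition order_iso :: "nat list \<Rightarrow> nat list \<Rightarrow> bool" where
  "order_iso xs ys \<longleftrightarrow> length xs = length ys \<and>
     (\<forall>i<length xs. \<forall>j<length xs. xs ! i < xs ! j \<longleftrightarrow> ys ! i < ys ! j)"

definition contains :: "nat list \<Rightarrow> nat list \<Rightarrow> bool" (infix "\<prec>" 50) where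
  "\<sigma> \<prec> \<pi> \<longleftrightarrow> (\<exists>ys. subseq ys \<pi> \<and> order_iso \<sigma> ys)"

definition std :: "nat list \<Rightarrow> nat list" where
  "std xs = map (\<lambda>x. card {y \<in> set xs. y < x}) xs"

definition inv_perm :: "nat list \<Rightarrow> nat list" where
  "inv_perm p = map (\<lambda>v. THE i. i < length p \<and> p ! i = v) [0..<length p]"

text \<open>Alternating: values at odd (1-based) positions all exceed values at even (1-based)
positions; with 0-based indices: even indices exceed odd indices.\<close>
definition alternating :: "nat list \<Rightarrow> bool" where
  "alternating \<sigma> \<longleftrightarrow> (\<forall>i<length \<sigma>. \<forall>j<length \<sigma>. even i \<and> odd j \<longrightarrow> \<sigma> ! j < \<sigma> ! i)"

definition al :: "nat list \<Rightarrow> nat" where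
  "al \<pi> = Max {length \<sigma> | \<sigma>. is_perm \<sigma> \<and> alternating \<sigma> \<and> (\<sigma> \<prec> \<pi> \<or> \<sigma> \<prec> inv_perm \<pi>)}"

definition dsum :: "nat list \<Rightarrow> nat list \<Rightarrow> nat list" where
  "dsum \<sigma> \<tau> = \<sigma> @ map (\<lambda>x. length \<sigma> + x) \<tau>"

definition ssum :: "nat list \<Rightarrow> nat list \<Rightarrow> nat list" where
  "ssum \<sigma> \<tau> = map (\<lambda>x. length \<tau> + x) \<sigma> @ \<tau>"

definition up_indec :: "nat list \<Rightarrow> bool" where
  "up_indec \<pi> \<longleftrightarrow> \<not> (\<exists>\<sigma> \<tau>. is_perm \<sigma> \<and> is_perm \<tau> \<and> \<sigma> \<noteq> [] \<and> \<tau> \<noteq> [] \<and> \<pi> = dsum \<sigma> \<tau>)"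

definition down_indec :: "nat list \<Rightarrow> bool" where
  "down_indec \<pi> \<longleftrightarrow> \<not> (\<exists>\<sigma> \<tau>. is_perm \<sigma> \<and> is_perm \<tau> \<and> \<sigma> \<noteq> [] \<and> \<tau> \<noteq> [] \<and> \<pi> = ssum \<sigma> \<tau>)"

text \<open>Decompositions of pi as a direct (resp. skew) sum of nonempty up- (resp. down-)
indecomposable blocks. Such a decomposition is unique; h+ and h- are the maximal block
lengths (0 for the empty permutation).\<close>
definition plus_decomp :: "nat list list \<Rightarrow> nat list \<Rightarrow> bool" where
  "plus_decomp bs \<pi> \<longleftrightarrow> (\<forall>b\<in>set bs. is_perm b \<and> b \<noteq> [] \<and> up_indec b) \<and> \<pi> = foldr dsum bs []"

definition minus_decomp :: "nat list list \<Rightarrow> nat list \<Rightarrow> bool" where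
  "minus_decomp bs \<pi> \<longleftrightarrow> (\<forall>b\<in>set bs. is_perm b \<and> b \<noteq> [] \<and> down_indec b) \<and> \<pi> = foldr ssum bs []"

definition h_plus :: "nat list \<Rightarrow> nat" where
  "h_plus \<pi> = Max (insert 0 {length b | b bs. plus_decomp bs \<pi> \<and> b \<in> set bs})"

definition h_minus :: "nat list \<Rightarrow> nat" where
  "h_minus \<pi> = Max (insert 0 {length b | b bs. minus_decomp bs \<pi> \<and> b \<in> set bs})"

definition H_plus :: "nat \<Rightarrow> nat list set" where
  "H_plus k = {\<pi>. is_perm \<pi> \<and> h_plus \<pi> < k}"

definition H_minus :: "nat \<Rightarrow> nat list set" where
  "H_minus k = {\<pi>. is_perm \<pi> \<and> h_minus \<pi> < k}"

definition greedy_len :: "nat \<Rightarrow> nat list \<Rightarrow> nat" where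
  "greedy_len k xs = Max {j. 1 \<le> j \<and> j \<le> length xs \<and> std (take j xs) \<in> H_plus k \<union> H_minus k}"

text \<open>Number of intervals of the greedy partition (fuel argument = length, which suffices
since every step removes at least one entry when k \<ge> 2).\<close>
fun greedy_count :: "nat \<Rightarrow> nat \<Rightarrow> nat list \<Rightarrow> nat" where
  "greedy_count 0 k xs = 0"
| "greedy_count (Suc f) k xs =
     (if xs = [] then 0 else Suc (greedy_count f k (drop (greedy_len k xs) xs)))"

definition s_k :: "nat \<Rightarrow> nat list \<Rightarrow> enat" where
  "s_k k \<pi> = (if k < 2 then \<infinity> else enat (greedy_count (length \<pi>) k \<pi>))"

definition wpo_on :: "('a \<Rightarrow> 'a \<Rightarrow> bool) \<Rightarrow> 'a set \<Rightarrow> bool" where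
  "wpo_on P A \<longleftrightarrow>
     (\<forall>x\<in>A. P x x) \<and>
     (\<forall>x\<in>A. \<forall>y\<in>A. P x y \<and> P y x \<longrightarrow> x = y) \<and>
     (\<forall>x\<in>A. \<forall>y\<in>A. \<forall>z\<in>A. P x y \<and> P y z \<longrightarrow> P x z) \<and>
     \<not> (\<exists>f :: nat \<Rightarrow> 'a. \<forall>i. f i \<in> A \<and> P (f (Suc i)) (f i) \<and> f (Suc i) \<noteq> f i) \<and>
     \<not> (\<exists>f :: nat \<Rightarrow> 'a. (\<forall>i. f i \<in> A) \<and> inj f \<and> (\<forall>i j. i \<noteq> j \<longrightarrow> \<not> P (f i) (f j)))"

end

theory Submission
  imports Defs "HOL-Library.Infinite_Set"
begin

definition bad_seq :: "'a set \<Rightarrow> (nat \<Rightarrow> 'a list) \<Rightarrow> bool" where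
  "bad_seq A f \<longleftrightarrow> (\<forall>i. set (f i) \<subseteq> A) \<and> (\<forall>i j. i < j \<longrightarrow> \<not> subseq (f i) (f j))"

definition ext_seq :: "'a list list \<Rightarrow> (nat \<Rightarrow> 'a list) \<Rightarrow> bool" where
  "ext_seq ws g \<longleftrightarrow> (\<forall>j<length ws. g j = ws ! j)"

definition mb_choose :: "'a set \<Rightarrow> 'a list list \<Rightarrow> 'a list" where
  "mb_choose A ws = (SOME w. (\<exists>g. bad_seq A g \<and> ext_seq ws g \<and> g (length ws) = w) \<and>
      (\<forall>g. bad_seq A g \<and> ext_seq ws g \<longrightarrow> length w \<le> length (g (length ws))))"

lemma mb_choose_spec:
  assumes "\<exists>g. bad_seq A g \<and> ext_seq ws g"
  shows "(\<exists>g. bad_seq A g \<and> ext_seq ws g \<and> g (length ws) = mb_choose A ws) \<and>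
      (\<forall>g. bad_seq A g \<and> ext_seq ws g \<longrightarrow> length (mb_choose A ws) \<le> length (g (length ws)))"
proof -
  define L where "L = (LEAST n. \<exists>g. bad_seq A g \<and> ext_seq ws g \<and> length (g (length ws)) = n)"
  from assms obtain g0 where g0: "bad_seq A g0 \<and> ext_seq ws g0" by blast
  have "\<exists>g. bad_seq A g \<and> ext_seq ws g \<and> length (g (length ws)) = L"
    unfolding L_def by (rule LeastI[of _ "length (g0 (length ws))"]) (use g0 in blast)
  then obtain g where g: "bad_seq A g" "ext_seq ws g" "length (g (length ws)) = L" by blast
  have min: "\<forall>g'. bad_seq A g' \<and> ext_seq ws g' \<longrightarrow> L \<le> length (g' (length ws))"
    unfolding L_def by (auto intro: Least_le)
  have "(\<exists>g'. bad_seq A g' \<and> ext_seq ws g' \<and> g' (length ws) = g (length ws)) \<and>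
      (\<forall>g'. bad_seq A g' \<and> ext_seq ws g' \<longrightarrow> length (g (length ws)) \<le> length (g' (length ws)))"
    using g min by auto
  then show ?thesis unfolding mb_choose_def by (rule someI)
qed

primrec mb_pre :: "'a set \<Rightarrow> nat \<Rightarrow> 'a list list" where
  "mb_pre A 0 = []"
| "mb_pre A (Suc n) = mb_pre A n @ [mb_choose A (mb_pre A n)]"

lemma mb_pre_length [simp]: "length (mb_pre A n) = n"
  by (induction n) auto

lemma mb_pre_nth: "i < n \<Longrightarrow> mb_pre A n ! i = mb_choose A (mb_pre A i)"
proof (induction n)
  case 0 then show ?case by simp
next
  case (Suc n)
  show ?case
  proof (cases "i < n")
    case True
    then show ?thesis using Suc by (simp add: nth_append)
  next
    case False
    then have "i = n" using Suc.prems by simp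
    then show ?thesis by (simp add: nth_append)
  qed
qed

lemma mb_pre_inv:
  assumes "\<exists>g. bad_seq A g"
  shows "\<exists>g. bad_seq A g \<and> ext_seq (mb_pre A n) g"
proof (induction n)
  case 0 then show ?case using assms by (simp add: ext_seq_def)
next
  case (Suc n)
  from mb_choose_spec[OF Suc] obtain g where
    g: "bad_seq A g" "ext_seq (mb_pre A n) g" "g n = mb_choose A (mb_pre A n)" by auto
  have "ext_seq (mb_pre A (Suc n)) g"
    unfolding ext_seq_def
  proof (intro allI impI)
    fix j assume "j < length (mb_pre A (Suc n))"
    then have "j < Suc n" by simp
    then have "j < n \<or> j = n" by auto
    then show "g j = mb_pre A (Suc n) ! j"
    proof
      assume "j < n" then show ?thesis using g by (auto simp: ext_seq_def nth_append)
    next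
      assume "j = n" then show ?thesis using g by (auto simp: nth_append)
    qed
  qed
  then show ?case using g by blast
qed

lemma set_tl_sub: "set (tl xs) \<subseteq> set xs"
  by (cases xs) auto

theorem higman:
  assumes "finite A"
  shows "\<not> bad_seq A f"
proof
  assume bf: "bad_seq A f"
  then have ex: "\<exists>g. bad_seq A g" by blast
  define m where "m i = mb_choose A (mb_pre A i)" for i
  have ext_m: "ext_seq (mb_pre A n) g \<longleftrightarrow> (\<forall>j<n. g j = m j)" for n g
    unfolding ext_seq_def m_def by (simp add: mb_pre_nth)
  have m_in: "\<exists>g. bad_seq A g \<and> (\<forall>j<Suc n. g j = m j)" for n
    using mb_pre_inv[OF ex, of "Suc n"] ext_m by blast
  have mbad: "bad_seq A m"
    unfolding bad_seq_def
  proof (intro conjI allI impI)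
    fix i
    obtain g where "bad_seq A g" "\<forall>j<Suc i. g j = m j" using m_in by blast
    then show "set (m i) \<subseteq> A" unfolding bad_seq_def by (metis lessI)
  next
    fix i j :: nat assume ij: "i < j"
    obtain g where "bad_seq A g" "\<forall>l<Suc j. g l = m l" using m_in by blast
    then show "\<not> subseq (m i) (m j)" using ij unfolding bad_seq_def
      by (metis less_Suc_eq)
  qed
  have mmin: "\<forall>g. bad_seq A g \<and> (\<forall>j<n. g j = m j) \<longrightarrow> length (m n) \<le> length (g n)" for n
    using mb_choose_spec[OF mb_pre_inv[OF ex, of n]] ext_m unfolding m_def by simp
  have ne: "m i \<noteq> []" for i
  proof
    assume "m i = []"
    then have "subseq (m i) (m (Suc i))" by simp
    then show False using mbad unfolding bad_seq_def by blast
  qed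
  have fin: "finite ((\<lambda>i. hd (m i)) ` UNIV)"
  proof (rule finite_subset[OF _ assms])
    show "(\<lambda>i. hd (m i)) ` UNIV \<subseteq> A"
    proof
      fix x assume "x \<in> (\<lambda>i. hd (m i)) ` UNIV"
      then obtain i where "x = hd (m i)" by blast
      then have "x \<in> set (m i)" using ne[of i] by simp
      then show "x \<in> A" using mbad unfolding bad_seq_def by blast
    qed
  qed
  obtain a where "infinite ((\<lambda>i. hd (m i)) -` {a})"
    using inf_img_fin_dom[OF fin infinite_UNIV_nat] by blast
  then obtain phi :: "nat \<Rightarrow> nat" where phi: "strict_mono phi" "\<forall>n. phi n \<in> (\<lambda>i. hd (m i)) -` {a}"
    using infinite_enumerate by blast
  have hd_phi: "m (phi n) = a # tl (m (phi n))" for n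
    using phi(2) ne[of "phi n"] by (metis list.collapse vimage_singleton_eq)
  define n0 where "n0 = phi 0"
  define g where "g j = (if j < n0 then m j else tl (m (phi (j - n0))))" for j
  have phi_ge: "n0 \<le> phi j" for j
    unfolding n0_def using phi(1) strict_mono_less_eq[OF phi(1), of 0 j] by simp
  have gbad: "bad_seq A g"
    unfolding bad_seq_def
  proof (intro conjI allI impI)
    fix i
    have mA: "set (m l) \<subseteq> A" for l using mbad unfolding bad_seq_def by blast
    show "set (g i) \<subseteq> A"
    proof (cases "i < n0")
      case True then show ?thesis using mA unfolding g_def by simp
    next
      case False then show ?thesis using mA[of "phi (i - n0)"] set_tl_sub[of "m (phi (i - n0))"]
        unfolding g_def by simp
    qed
  next
    fix i j :: nat assume ij: "i < j"
    show "\<not> subseq (g i) (g j)"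
    proof (cases "j < n0")
      case True
      then have "g i = m i" "g j = m j" using ij unfolding g_def by simp_all
      then show ?thesis using ij mbad unfolding bad_seq_def by simp
    next
      case jn: False
      show ?thesis
      proof (cases "i < n0")
        case True
        show ?thesis
        proof
          assume "subseq (g i) (g j)"
          then have "subseq (m i) (tl (m (phi (j - n0))))" using True jn unfolding g_def by simp
          then have "subseq (m i) (a # tl (m (phi (j - n0))))" by (rule list_emb_Cons)
          then have "subseq (m i) (m (phi (j - n0)))" using hd_phi[of "j - n0"] by simp
          moreover have "i < phi (j - n0)" using True phi_ge[of "j - n0"] by simp
          ultimately show False using mbad unfolding bad_seq_def by blast
        qed
      next
        case False
        show ?thesis
        proof
          assume "subseq (g i) (g j)"
          then have "subseq (tl (m (phi (i - n0)))) (tl (m (phi (j - n0))))"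
            using False jn unfolding g_def by simp
          then have "subseq (a # tl (m (phi (i - n0)))) (a # tl (m (phi (j - n0))))"
            by (rule subseq_Cons2)
          then have "subseq (m (phi (i - n0))) (m (phi (j - n0)))"
            using hd_phi[of "i - n0"] hd_phi[of "j - n0"] by simp
          moreover have "phi (i - n0) < phi (j - n0)"
            using phi(1) False jn ij by (simp add: strict_mono_less)
          ultimately show False using mbad unfolding bad_seq_def by blast
        qed
      qed
    qed
  qed
  have "\<forall>j<n0. g j = m j" unfolding g_def by simp
  then have "length (m n0) \<le> length (g n0)" using mmin gbad by blast
  moreover have "g n0 = tl (m n0)" unfolding g_def n0_def by simp
  ultimately show False using ne[of n0] by (cases "m n0") auto
qed

corollary higman_good:
  fixes f :: "nat \<Rightarrow> 'a list"
  assumes "finite A" "\<forall>i. set (f i) \<subseteq> A"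
  shows "\<exists>i j. i < j \<and> subseq (f i) (f j)"
  using higman[OF assms(1), of f] assms(2) unfolding bad_seq_def by blast


lemma order_iso_zip:
  "order_iso xs ys \<longleftrightarrow> length xs = length ys \<and>
     (\<forall>p\<in>set (zip xs ys). \<forall>q\<in>set (zip xs ys). fst p < fst q \<longleftrightarrow> snd p < snd q)"
proof
  assume o: "order_iso xs ys"
  show "length xs = length ys \<and>
     (\<forall>p\<in>set (zip xs ys). \<forall>q\<in>set (zip xs ys). fst p < fst q \<longleftrightarrow> snd p < snd q)"
  proof (intro conjI ballI)
    show "length xs = length ys" using o unfolding order_iso_def by simp
  next
    fix p q assume "p \<in> set (zip xs ys)" "q \<in> set (zip xs ys)"
    then obtain i j where "i < length xs" "j < length xs" "xs!i = fst p" "ys!i = snd p"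
       "xs!j = fst q" "ys!j = snd q"
      unfolding in_set_zip by blast
    then show "fst p < fst q \<longleftrightarrow> snd p < snd q" using o unfolding order_iso_def by metis
  qed
next
  assume a: "length xs = length ys \<and>
     (\<forall>p\<in>set (zip xs ys). \<forall>q\<in>set (zip xs ys). fst p < fst q \<longleftrightarrow> snd p < snd q)"
  show "order_iso xs ys" unfolding order_iso_def
  proof (intro conjI allI impI)
    fix i j assume ij: "i < length xs" "j < length xs"
    then have "(xs!i, ys!i) \<in> set (zip xs ys)" "(xs!j, ys!j) \<in> set (zip xs ys)"
      using a by (force simp: in_set_zip)+
    then show "xs ! i < xs ! j \<longleftrightarrow> ys ! i < ys ! j"
      using a[THEN conjunct2, rule_format, of "(xs!i, ys!i)" "(xs!j, ys!j)"] by simp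
  qed (use a in simp)
qed

lemma order_iso_refl: "order_iso xs xs"
  unfolding order_iso_def by auto

lemma order_iso_sym: "order_iso xs ys \<Longrightarrow> order_iso ys xs"
  unfolding order_iso_def by auto

lemma order_iso_trans: "order_iso xs ys \<Longrightarrow> order_iso ys zs \<Longrightarrow> order_iso xs zs"
  unfolding order_iso_def by auto

lemma subseq_map_inv:
  "subseq xs (map f ys) \<Longrightarrow> \<exists>zs. subseq zs ys \<and> xs = map f zs"
proof (induction ys arbitrary: xs)
  case Nil
  then show ?case by auto
next
  case (Cons y ys)
  show ?case
  proof (cases xs)
    case Nil
    then show ?thesis by auto
  next
    case (Cons x xs')
    show ?thesis
    proof (cases "x = f y")
      case True
      with Cons.prems Cons have "subseq xs' (map f ys)" by auto
      then obtain zs where "subseq zs ys" "xs' = map f zs" using Cons.IH by blast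
      then show ?thesis using Cons True by (intro exI[of _ "y # zs"]) auto
    next
      case False
      with Cons.prems Cons have "subseq xs (map f ys)" by auto
      then obtain zs where "subseq zs ys" "xs = map f zs" using Cons.IH by blast
      then show ?thesis by (intro exI[of _ zs]) auto
    qed
  qed
qed

lemma order_iso_subseq:
  assumes "order_iso xs ys" "subseq xs' xs"
  shows "\<exists>ys'. subseq ys' ys \<and> order_iso xs' ys'"
proof -
  have l: "length xs = length ys" using assms(1) unfolding order_iso_def by auto
  then have "subseq xs' (map fst (zip xs ys))" using assms(2) by simp
  then obtain zs where zs: "subseq zs (zip xs ys)" "xs' = map fst zs"
    using subseq_map_inv by blast
  have "subseq (map snd zs) (map snd (zip xs ys))" using zs(1) by (rule subseq_map)
  then have 1: "subseq (map snd zs) ys" using l by simp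
  have sub: "set zs \<subseteq> set (zip xs ys)"
  proof
    fix z assume "z \<in> set zs"
    from list_emb_set[OF zs(1) this] show "z \<in> set (zip xs ys)" by blast
  qed
  have all: "\<forall>p\<in>set (zip xs ys). \<forall>q\<in>set (zip xs ys). fst p < fst q \<longleftrightarrow> snd p < snd q"
    using assms(1) unfolding order_iso_zip by blast
  have "order_iso (map fst zs) (map snd zs)"
    unfolding order_iso_zip zip_map_fst_snd
  proof (intro conjI ballI)
    fix p q assume "p \<in> set zs" "q \<in> set zs"
    then show "fst p < fst q \<longleftrightarrow> snd p < snd q" using all sub by blast
  qed simp
  then show ?thesis using 1 zs(2) by blast
qed

lemma contains_refl: "\<sigma> \<prec> \<sigma>"
  unfolding contains_def using order_iso_refl by blast

lemma contains_length: "\<sigma> \<prec> \<pi> \<Longrightarrow> length \<sigma> \<le> length \<pi>"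
  unfolding contains_def order_iso_def using list_emb_length by fastforce

lemma contains_trans:
  assumes "a \<prec> b" "b \<prec> c" shows "a \<prec> c"
proof -
  obtain ys where ys: "subseq ys b" "order_iso a ys" using assms(1) unfolding contains_def by blast
  obtain zs where zs: "subseq zs c" "order_iso b zs" using assms(2) unfolding contains_def by blast
  obtain zs' where z1: "subseq zs' zs" and z2: "order_iso ys zs'" using order_iso_subseq[OF zs(2) ys(1)] by blast
  have "subseq zs' c" using z1 zs(1) by (rule subseq_order.trans)
  then show ?thesis unfolding contains_def using ys(2) z2 order_iso_trans by blast
qed

lemma std_length [simp]: "length (std xs) = length xs"
  unfolding std_def by simp

lemma std_nth: "i < length xs \<Longrightarrow> std xs ! i = card {y \<in> set xs. y < xs ! i}"
  unfolding std_def by simp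

lemma rank_strict:
  fixes xs :: "nat list"
  assumes "x < x'" "x \<in> set xs"
  shows "card {y \<in> set xs. y < x} < card {y \<in> set xs. y < x'}"
  by (rule psubset_card_mono) (use assms in auto)

lemma rank_mono:
  fixes xs :: "nat list"
  assumes "x \<le> x'"
  shows "card {y \<in> set xs. y < x} \<le> card {y \<in> set xs. y < x'}"
  by (rule card_mono) (use assms in auto)

lemma order_iso_std: "order_iso xs (std xs)"
  unfolding order_iso_def
proof (intro conjI allI impI)
  fix i j assume ij: "i < length xs" "j < length xs"
  show "xs ! i < xs ! j \<longleftrightarrow> std xs ! i < std xs ! j"
    using rank_strict[of "xs!i" "xs!j" xs] rank_mono[of "xs!j" "xs!i" xs] ij
    by (auto simp: std_nth not_less[symmetric])
qed simp

lemma std_perm: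
  assumes "distinct xs" shows "is_perm (std xs)"
proof -
  have oi: "order_iso xs (std xs)" by (rule order_iso_std)
  have d: "distinct (std xs)"
    unfolding distinct_conv_nth
  proof (intro allI impI)
    fix i j assume "i < length (std xs)" "j < length (std xs)" "i \<noteq> j"
    then have "xs ! i \<noteq> xs ! j" using assms by (simp add: nth_eq_iff_index_eq)
    then have "xs ! i < xs ! j \<or> xs ! j < xs ! i" by auto
    moreover have "xs ! i < xs ! j \<longleftrightarrow> std xs ! i < std xs ! j" "xs ! j < xs ! i \<longleftrightarrow> std xs ! j < std xs ! i"
      using oi \<open>i < length (std xs)\<close> \<open>j < length (std xs)\<close> unfolding order_iso_def by simp_all
    ultimately show "std xs ! i \<noteq> std xs ! j" by auto
  qed
  have sub: "set (std xs) \<subseteq> {0..<length xs}"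
  proof
    fix v assume "v \<in> set (std xs)"
    then obtain i where i: "i < length xs" "v = std xs ! i" by (auto simp: in_set_conv_nth)
    have m: "xs ! i \<in> set xs" using i by simp
    have "{y \<in> set xs. y < xs ! i} \<subseteq> set xs" by blast
    moreover have "xs ! i \<notin> {y \<in> set xs. y < xs ! i}" by simp
    ultimately have "{y \<in> set xs. y < xs ! i} \<subset> set xs" using m by blast
    then have "card {y \<in> set xs. y < xs ! i} < card (set xs)" by (intro psubset_card_mono) simp_all
    also have "\<dots> = length xs" using assms by (simp add: distinct_card)
    finally show "v \<in> {0..<length xs}" using i by (simp add: std_nth)
  qed
  have "card (set (std xs)) = length xs" using d by (simp add: distinct_card)
  then have "set (std xs) = {0..<length xs}" using sub by (intro card_subset_eq) simp_all
  then show ?thesis unfolding is_perm_def using d by simp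
qed

lemma std_nth_idx:
  assumes "distinct xs" "i < length xs"
  shows "std xs ! i = card {j. j < length xs \<and> xs ! j < xs ! i}"
proof -
  have im: "(\<lambda>j. xs ! j) ` {j. j < length xs \<and> xs ! j < xs ! i} = {y \<in> set xs. y < xs ! i}"
  proof
    show "(\<lambda>j. xs ! j) ` {j. j < length xs \<and> xs ! j < xs ! i} \<subseteq> {y \<in> set xs. y < xs ! i}"
      by auto
  next
    show "{y \<in> set xs. y < xs ! i} \<subseteq> (\<lambda>j. xs ! j) ` {j. j < length xs \<and> xs ! j < xs ! i}"
    proof
      fix y assume y: "y \<in> {y \<in> set xs. y < xs ! i}"
      then obtain j where "j < length xs" "xs ! j = y" by (auto simp: in_set_conv_nth)
      then show "y \<in> (\<lambda>j. xs ! j) ` {j. j < length xs \<and> xs ! j < xs ! i}" using y by blast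
    qed
  qed
  have inj: "inj_on (\<lambda>j. xs ! j) {j. j < length xs \<and> xs ! j < xs ! i}"
    using assms(1) by (simp add: inj_on_def nth_eq_iff_index_eq)
  have "card {j. j < length xs \<and> xs ! j < xs ! i} = card {y \<in> set xs. y < xs ! i}"
    using card_image[OF inj] im by simp
  then show ?thesis using assms(2) by (simp add: std_nth)
qed

lemma std_order_iso_eq:
  assumes "order_iso xs ys" "distinct xs" "distinct ys"
  shows "std xs = std ys"
proof -
  have l: "length xs = length ys" using assms(1) unfolding order_iso_def by auto
  have e: "\<forall>a<length xs. \<forall>b<length xs. (xs!a < xs!b) = (ys!a < ys!b)"
    using assms(1) unfolding order_iso_def by blast
  show ?thesis
  proof (rule nth_equalityI)
    fix i assume i: "i < length (std xs)"
    have "{j. j < length xs \<and> xs ! j < xs ! i} = {j. j < length ys \<and> ys ! j < ys ! i}"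
    proof (rule Collect_cong)
      fix j show "(j < length xs \<and> xs ! j < xs ! i) = (j < length ys \<and> ys ! j < ys ! i)"
        using e[rule_format, of j i] i l by auto
    qed
    then show "std xs ! i = std ys ! i" using i l assms by (simp add: std_nth_idx)
  qed (simp add: l)
qed

lemma std_perm_id:
  assumes "is_perm p" shows "std p = p"
proof (rule nth_equalityI)
  fix i assume i: "i < length (std p)"
  have "{y \<in> set p. y < p ! i} = {0..<p ! i}"
    using assms i unfolding is_perm_def
    by auto (metis atLeastLessThan_iff nth_mem order.strict_trans)
  then show "std p ! i = p ! i" using i by (simp add: std_nth)
qed simp

lemma perm_order_iso_eq:
  assumes "is_perm a" "is_perm b" "order_iso a b" shows "a = b"
  using std_order_iso_eq[OF assms(3)] assms std_perm_id unfolding is_perm_def by metis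

lemma std_unique:
  assumes "distinct ys" "is_perm s" "order_iso ys s" shows "std ys = s"
  using std_order_iso_eq[OF assms(3) assms(1)] assms(2) std_perm_id is_perm_def by metis

lemma std_eq_order_iso:
  assumes "distinct xs" "distinct ys" "std xs = std ys"
  shows "order_iso xs ys"
  using order_iso_std[of xs] order_iso_std[of ys] assms(3)
  by (metis order_iso_sym order_iso_trans)

lemma contains_perm_antisym:
  assumes "is_perm a" "is_perm b" "a \<prec> b" "b \<prec> a" shows "a = b"
proof -
  obtain ys where ys: "subseq ys b" "order_iso a ys" using assms(3) unfolding contains_def by blast
  have "length a = length b" using contains_length[OF assms(3)] contains_length[OF assms(4)] by simp
  then have "length ys = length b" using ys(2) unfolding order_iso_def by simp
  then have "ys = b" using ys(1) subseq_same_length by blast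
  then show ?thesis using perm_order_iso_eq assms ys by simp
qed


lemma length_dsum [simp]: "length (dsum a b) = length a + length b"
  unfolding dsum_def by simp

lemma length_ssum [simp]: "length (ssum a b) = length a + length b"
  unfolding ssum_def by simp

lemma map_zero_plus: "map (\<lambda>x. (0::nat) + x) a = a"
  by (induction a) simp_all

lemma dsum_Nil [simp]: "dsum a [] = a" "dsum [] a = a"
  unfolding dsum_def by (simp_all only: map_zero_plus list.size append_Nil2 list.map append_Nil)

lemma ssum_Nil [simp]: "ssum a [] = a" "ssum [] a = a"
  unfolding ssum_def by (simp_all only: map_zero_plus list.size append_Nil2 list.map append_Nil)

lemma dsum_assoc: "dsum (dsum a b) c = dsum a (dsum b c)"
  unfolding dsum_def by (simp add: add.assoc)

lemma ssum_assoc: "ssum (ssum a b) c = ssum a (ssum b c)"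
  unfolding ssum_def by (simp add: add.assoc add.commute add.left_commute)

lemma foldr_dsum_gen: "foldr dsum bs t = dsum (foldr dsum bs []) t"
  by (induction bs) (simp_all add: dsum_assoc)

lemma foldr_ssum_gen: "foldr ssum bs t = ssum (foldr ssum bs []) t"
  by (induction bs) (simp_all add: ssum_assoc)

lemma foldr_dsum_append: "foldr dsum (xs @ ys) [] = dsum (foldr dsum xs []) (foldr dsum ys [])"
  by (simp only: foldr_append) (rule foldr_dsum_gen)

lemma foldr_ssum_append: "foldr ssum (xs @ ys) [] = ssum (foldr ssum xs []) (foldr ssum ys [])"
  by (simp only: foldr_append) (rule foldr_ssum_gen)

lemma length_foldr_dsum: "length (foldr dsum bs []) = sum_list (map length bs)"
  by (induction bs) auto

lemma length_foldr_ssum: "length (foldr ssum bs []) = sum_list (map length bs)"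
  by (induction bs) auto

lemma perm_dsum:
  assumes "is_perm a" "is_perm b" shows "is_perm (dsum a b)"
proof -
  have sa: "set a = {0..<length a}" and da: "distinct a" using assms(1) unfolding is_perm_def by auto
  have sb: "set b = {0..<length b}" and db: "distinct b" using assms(2) unfolding is_perm_def by auto
  have s2: "set (map (\<lambda>x. length a + x) b) = {length a..<length a + length b}"
    using sb by (auto simp: image_iff)
  have d2: "distinct (map (\<lambda>x. length a + x) b)" using db by (simp add: distinct_map)
  have "set a \<inter> set (map (\<lambda>x. length a + x) b) = {}" using sa s2 by auto
  then have "distinct (dsum a b)" unfolding dsum_def using da d2 by simp
  moreover have "set (dsum a b) = {0..<length (dsum a b)}"
    unfolding dsum_def using sa s2 by auto
  ultimately show ?thesis unfolding is_perm_def by simp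
qed

lemma perm_ssum:
  assumes "is_perm a" "is_perm b" shows "is_perm (ssum a b)"
proof -
  have sa: "set a = {0..<length a}" and da: "distinct a" using assms(1) unfolding is_perm_def by auto
  have sb: "set b = {0..<length b}" and db: "distinct b" using assms(2) unfolding is_perm_def by auto
  have s2: "set (map (\<lambda>x. length b + x) a) = {length b..<length b + length a}"
    using sa by (auto simp: image_iff)
  have d2: "distinct (map (\<lambda>x. length b + x) a)" using da by (simp add: distinct_map)
  have "set (map (\<lambda>x. length b + x) a) \<inter> set b = {}" using sb s2 by auto
  then have "distinct (ssum a b)" unfolding ssum_def using db d2 by simp
  moreover have "set (ssum a b) = {0..<length (ssum a b)}"
    unfolding ssum_def using sb s2 by auto
  ultimately show ?thesis unfolding is_perm_def by simp
qed

lemma perm_foldr_dsum: "\<forall>b\<in>set bs. is_perm b \<Longrightarrow> is_perm (foldr dsum bs [])"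
proof (induction bs)
  case Nil then show ?case by (simp add: is_perm_def)
next
  case (Cons b bs) then show ?case by (simp add: perm_dsum)
qed

lemma perm_foldr_ssum: "\<forall>b\<in>set bs. is_perm b \<Longrightarrow> is_perm (foldr ssum bs [])"
proof (induction bs)
  case Nil then show ?case by (simp add: is_perm_def)
next
  case (Cons b bs) then show ?case by (simp add: perm_ssum)
qed

lemma plus_decomp_exists: "is_perm p \<Longrightarrow> \<exists>bs. plus_decomp bs p"
proof (induction "length p" arbitrary: p rule: less_induct)
  case less
  show ?case
  proof (cases "p = []")
    case True then show ?thesis by (intro exI[of _ "[]"]) (simp add: plus_decomp_def)
  next
    case ne: False
    show ?thesis
    proof (cases "up_indec p")
      case True
      then show ?thesis using ne less.prems by (intro exI[of _ "[p]"]) (simp add: plus_decomp_def)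
    next
      case False
      then obtain s t where st: "is_perm s" "is_perm t" "s \<noteq> []" "t \<noteq> []" "p = dsum s t"
        unfolding up_indec_def by blast
      have "length s < length p" "length t < length p" using st by simp_all
      then obtain bs1 bs2 where "plus_decomp bs1 s" "plus_decomp bs2 t"
        using less.hyps st by blast
      then have "plus_decomp (bs1 @ bs2) p"
        unfolding plus_decomp_def using st(5) by (simp only: foldr_dsum_append set_append) blast
      then show ?thesis by blast
    qed
  qed
qed

lemma minus_decomp_exists: "is_perm p \<Longrightarrow> \<exists>bs. minus_decomp bs p"
proof (induction "length p" arbitrary: p rule: less_induct)
  case less
  show ?case
  proof (cases "p = []")
    case True then show ?thesis by (intro exI[of _ "[]"]) (simp add: minus_decomp_def)
  next
    case ne: False
    show ?thesis
    proof (cases "down_indec p")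
      case True
      then show ?thesis using ne less.prems by (intro exI[of _ "[p]"]) (simp add: minus_decomp_def)
    next
      case False
      then obtain s t where st: "is_perm s" "is_perm t" "s \<noteq> []" "t \<noteq> []" "p = ssum s t"
        unfolding down_indec_def by blast
      have "length s < length p" "length t < length p" using st by simp_all
      then obtain bs1 bs2 where "minus_decomp bs1 s" "minus_decomp bs2 t"
        using less.hyps st by blast
      then have "minus_decomp (bs1 @ bs2) p"
        unfolding minus_decomp_def using st(5) by (simp only: foldr_ssum_append set_append) blast
      then show ?thesis by blast
    qed
  qed
qed

lemma member_le_sum_list: "(b::'a list) \<in> set bs \<Longrightarrow> length b \<le> sum_list (map length bs)"
  by (induction bs) auto

lemma max_bound_ge:
  fixes S :: "nat set"
  assumes "\<forall>x\<in>S. x \<le> n" "y \<in> S"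
  shows "y \<le> Max (insert 0 S)"
proof -
  have "insert 0 S \<subseteq> {..n}" using assms(1) by blast
  then have "finite (insert 0 S)" by (rule finite_subset) simp
  moreover have "y \<in> insert 0 S" using assms(2) by blast
  ultimately show ?thesis by (rule Max_ge)
qed

lemma max_bound_le:
  fixes S :: "nat set"
  assumes "\<forall>x\<in>S. x \<le> n"
  shows "Max (insert 0 S) \<le> n"
proof -
  have "insert 0 S \<subseteq> {..n}" using assms(1) by blast
  then have "finite (insert 0 S)" by (rule finite_subset) simp
  moreover have "\<forall>x\<in>insert 0 S. x \<le> n" using assms by blast
  ultimately show ?thesis using Max.boundedI[of "insert 0 S" n] by blast
qed

lemma plus_block_le:
  assumes "plus_decomp bs p" "b \<in> set bs" shows "length b \<le> length p"
proof -
  have "p = foldr dsum bs []" using assms(1) unfolding plus_decomp_def by blast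
  then have "length p = sum_list (map length bs)" by (simp only: length_foldr_dsum)
  then show ?thesis using member_le_sum_list[OF assms(2)] by simp
qed

lemma minus_block_le:
  assumes "minus_decomp bs p" "b \<in> set bs" shows "length b \<le> length p"
proof -
  have "p = foldr ssum bs []" using assms(1) unfolding minus_decomp_def by blast
  then have "length p = sum_list (map length bs)" by (simp only: length_foldr_ssum)
  then show ?thesis using member_le_sum_list[OF assms(2)] by simp
qed

lemma h_plus_block:
  assumes "plus_decomp bs p" "b \<in> set bs"
  shows "length b \<le> h_plus p"
  unfolding h_plus_def
proof (rule max_bound_ge)
  show "\<forall>x\<in>{length b | b bs. plus_decomp bs p \<and> b \<in> set bs}. x \<le> length p"
    using plus_block_le by blast
  show "length b \<in> {length b | b bs. plus_decomp bs p \<and> b \<in> set bs}" using assms by blast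
qed

lemma h_minus_block:
  assumes "minus_decomp bs p" "b \<in> set bs"
  shows "length b \<le> h_minus p"
  unfolding h_minus_def
proof (rule max_bound_ge)
  show "\<forall>x\<in>{length b | b bs. minus_decomp bs p \<and> b \<in> set bs}. x \<le> length p"
    using minus_block_le by blast
  show "length b \<in> {length b | b bs. minus_decomp bs p \<and> b \<in> set bs}" using assms by blast
qed

lemma h_plus_le_length: "h_plus p \<le> length p"
  unfolding h_plus_def
  by (rule max_bound_le) (use plus_block_le in blast)

lemma H_plus_blocks:
  assumes "p \<in> H_plus k"
  shows "\<exists>bs. p = foldr dsum bs [] \<and> (\<forall>b\<in>set bs. is_perm b \<and> length b < k)"
proof -
  have "is_perm p" "h_plus p < k" using assms unfolding H_plus_def by auto
  obtain bs where bs: "plus_decomp bs p" using plus_decomp_exists[OF \<open>is_perm p\<close>] by blast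
  have "\<forall>b\<in>set bs. is_perm b \<and> length b < k"
  proof
    fix b assume b: "b \<in> set bs"
    have "length b \<le> h_plus p" by (rule h_plus_block[OF bs b])
    moreover have "is_perm b" using bs b unfolding plus_decomp_def by blast
    ultimately show "is_perm b \<and> length b < k" using \<open>h_plus p < k\<close> by simp
  qed
  moreover have "p = foldr dsum bs []" using bs unfolding plus_decomp_def by blast
  ultimately show ?thesis by blast
qed

lemma H_minus_blocks:
  assumes "p \<in> H_minus k"
  shows "\<exists>bs. p = foldr ssum bs [] \<and> (\<forall>b\<in>set bs. is_perm b \<and> length b < k)"
proof -
  have "is_perm p" "h_minus p < k" using assms unfolding H_minus_def by auto
  obtain bs where bs: "minus_decomp bs p" using minus_decomp_exists[OF \<open>is_perm p\<close>] by blast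
  have "\<forall>b\<in>set bs. is_perm b \<and> length b < k"
  proof
    fix b assume b: "b \<in> set bs"
    have "length b \<le> h_minus p" by (rule h_minus_block[OF bs b])
    moreover have "is_perm b" using bs b unfolding minus_decomp_def by blast
    ultimately show "is_perm b \<and> length b < k" using \<open>h_minus p < k\<close> by simp
  qed
  moreover have "p = foldr ssum bs []" using bs unfolding minus_decomp_def by blast
  ultimately show ?thesis by blast
qed


lemma order_iso_take: "order_iso xs ys \<Longrightarrow> order_iso (take m xs) (take m ys)"
  unfolding order_iso_def by simp

lemma order_iso_drop: 
  assumes "order_iso xs ys" shows "order_iso (drop m xs) (drop m ys)"
  unfolding order_iso_def
proof (intro conjI allI impI)
  show "length (drop m xs) = length (drop m ys)" using assms unfolding order_iso_def by simp
next
  fix i j assume "i < length (drop m xs)" "j < length (drop m xs)"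
  then have "m + i < length xs" "m + j < length xs" by simp_all
  then show "drop m xs ! i < drop m xs ! j \<longleftrightarrow> drop m ys ! i < drop m ys ! j"
    using assms unfolding order_iso_def by simp
qed

lemma order_iso_shift: "order_iso (map (\<lambda>x. c + x) t) t"
  unfolding order_iso_def by simp

lemma perm_nth_less: "is_perm s \<Longrightarrow> i < length s \<Longrightarrow> s ! i < length s"
  unfolding is_perm_def using nth_mem by fastforce

lemma split_dsum:
  assumes d: "distinct xs" and e: "std xs = dsum s t" and ps: "is_perm s" and pt: "is_perm t"
  shows "std (take (length s) xs) = s \<and> std (drop (length s) xs) = t \<and>
    (\<forall>x\<in>set (take (length s) xs). \<forall>y\<in>set (drop (length s) xs). x < y)"
proof -
  let ?m = "length s"
  have oi: "order_iso xs (dsum s t)" using order_iso_std[of xs] e by simp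
  have lx: "length xs = length s + length t" using oi unfolding order_iso_def by simp
  have tk: "take ?m (dsum s t) = s" unfolding dsum_def by simp
  have dr: "drop ?m (dsum s t) = map (\<lambda>x. length s + x) t" unfolding dsum_def by simp
  have 1: "std (take ?m xs) = s"
    using std_unique[of "take ?m xs" s] d ps order_iso_take[OF oi, of ?m] tk by simp
  have "order_iso (drop ?m xs) (map (\<lambda>x. length s + x) t)" using order_iso_drop[OF oi, of ?m] dr by simp
  then have "order_iso (drop ?m xs) t" using order_iso_shift order_iso_trans by blast
  then have 2: "std (drop ?m xs) = t" using std_unique[of "drop ?m xs" t] d pt by simp
  have 3: "\<forall>x\<in>set (take ?m xs). \<forall>y\<in>set (drop ?m xs). x < y"
  proof (intro ballI)
    fix x y assume "x \<in> set (take ?m xs)" "y \<in> set (drop ?m xs)"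
    then obtain i j where i: "i < ?m" "x = xs ! i" and j: "j < length t" "y = xs ! (?m + j)"
      using lx by (auto simp: in_set_conv_nth)
    have a: "dsum s t ! i = s ! i" using i unfolding dsum_def by (simp add: nth_append)
    have b: "dsum s t ! (?m + j) = ?m + t ! j" using j unfolding dsum_def by (simp add: nth_append)
    have "s ! i < ?m" using perm_nth_less[OF ps i(1)] .
    then have "dsum s t ! i < dsum s t ! (?m + j)" using a b by simp
    moreover have "i < length xs" "?m + j < length xs" using i j lx by simp_all
    ultimately show "x < y" using oi i j unfolding order_iso_def by blast
  qed
  show ?thesis using 1 2 3 by blast
qed

lemma split_ssum:
  assumes d: "distinct xs" and e: "std xs = ssum s t" and ps: "is_perm s" and pt: "is_perm t"
  shows "std (take (length s) xs) = s \<and> std (drop (length s) xs) = t \<and>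
    (\<forall>x\<in>set (take (length s) xs). \<forall>y\<in>set (drop (length s) xs). y < x)"
proof -
  let ?m = "length s"
  have oi: "order_iso xs (ssum s t)" using order_iso_std[of xs] e by simp
  have lx: "length xs = length s + length t" using oi unfolding order_iso_def by simp
  have tk: "take ?m (ssum s t) = map (\<lambda>x. length t + x) s" unfolding ssum_def by simp
  have dr: "drop ?m (ssum s t) = t" unfolding ssum_def by simp
  have "order_iso (take ?m xs) (map (\<lambda>x. length t + x) s)" using order_iso_take[OF oi, of ?m] tk by simp
  then have "order_iso (take ?m xs) s" using order_iso_shift order_iso_trans by blast
  then have 1: "std (take ?m xs) = s" using std_unique[of "take ?m xs" s] d ps by simp
  have 2: "std (drop ?m xs) = t"
    using std_unique[of "drop ?m xs" t] d pt order_iso_drop[OF oi, of ?m] dr by simp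
  have 3: "\<forall>x\<in>set (take ?m xs). \<forall>y\<in>set (drop ?m xs). y < x"
  proof (intro ballI)
    fix x y assume "x \<in> set (take ?m xs)" "y \<in> set (drop ?m xs)"
    then obtain i j where i: "i < ?m" "x = xs ! i" and j: "j < length t" "y = xs ! (?m + j)"
      using lx by (auto simp: in_set_conv_nth)
    have a: "ssum s t ! i = length t + s ! i" using i unfolding ssum_def by (simp add: nth_append)
    have b: "ssum s t ! (?m + j) = t ! j" using j unfolding ssum_def by (simp add: nth_append)
    have "t ! j < length t" using perm_nth_less[OF pt j(1)] .
    then have "ssum s t ! (?m + j) < ssum s t ! i" using a b by simp
    moreover have "i < length xs" "?m + j < length xs" using i j lx by simp_all
    ultimately show "y < x" using oi i j unfolding order_iso_def by blast
  qed
  show ?thesis using 1 2 3 by blast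
qed

lemma std_Nil_iff: "std xs = [] \<longleftrightarrow> xs = []"
  using std_length[of xs] by (metis length_0_conv)

lemma blocks_split_plus:
  "distinct xs \<Longrightarrow> std xs = foldr dsum bs [] \<Longrightarrow> \<forall>b\<in>set bs. is_perm b \<Longrightarrow>
   \<exists>ps. xs = concat ps \<and> map std ps = bs \<and> sorted_wrt (\<lambda>p q. \<forall>x\<in>set p. \<forall>y\<in>set q. x < y) ps"
proof (induction bs arbitrary: xs)
  case Nil
  then have "xs = []" using std_Nil_iff by simp
  then show ?case by (intro exI[of _ "[]"]) simp
next
  case (Cons b bs)
  have pb: "is_perm b" and pr: "is_perm (foldr dsum bs [])" using Cons.prems(3) perm_foldr_dsum by auto
  have e: "std xs = dsum b (foldr dsum bs [])" using Cons.prems(2) by simp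
  note sp = split_dsum[OF Cons.prems(1) e pb pr]
  have "distinct (drop (length b) xs)" using Cons.prems(1) by simp
  then obtain ps where ps: "drop (length b) xs = concat ps" "map std ps = bs"
    "sorted_wrt (\<lambda>p q. \<forall>x\<in>set p. \<forall>y\<in>set q. x < y) ps"
    using Cons.IH sp Cons.prems(3) by auto
  have A: "xs = concat (take (length b) xs # ps)" using ps(1) by (metis append_take_drop_id concat.simps(2))
  have B: "map std (take (length b) xs # ps) = b # bs" using sp ps by simp
  have C: "sorted_wrt (\<lambda>p q. \<forall>x\<in>set p. \<forall>y\<in>set q. x < y) (take (length b) xs # ps)"
  proof -
    have "\<forall>q\<in>set ps. \<forall>x\<in>set (take (length b) xs). \<forall>y\<in>set q. x < y"
    proof (intro ballI)
      fix q x y assume "q \<in> set ps" "x \<in> set (take (length b) xs)" "y \<in> set q"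
      then have "y \<in> set (drop (length b) xs)" using ps(1) by auto
      then show "x < y" using sp \<open>x \<in> set (take (length b) xs)\<close> by blast
    qed
    then show ?thesis using ps(3) by simp
  qed
  show ?case by (rule exI[of _ "take (length b) xs # ps"], intro conjI, rule A, rule B, rule C)
qed

lemma blocks_split_minus:
  "distinct xs \<Longrightarrow> std xs = foldr ssum bs [] \<Longrightarrow> \<forall>b\<in>set bs. is_perm b \<Longrightarrow>
   \<exists>ps. xs = concat ps \<and> map std ps = bs \<and> sorted_wrt (\<lambda>p q. \<forall>x\<in>set p. \<forall>y\<in>set q. y < x) ps"
proof (induction bs arbitrary: xs)
  case Nil
  then have "xs = []" using std_Nil_iff by simp
  then show ?case by (intro exI[of _ "[]"]) simp
next
  case (Cons b bs)
  have pb: "is_perm b" and pr: "is_perm (foldr ssum bs [])" using Cons.prems(3) perm_foldr_ssum by auto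
  have e: "std xs = ssum b (foldr ssum bs [])" using Cons.prems(2) by simp
  note sp = split_ssum[OF Cons.prems(1) e pb pr]
  have "distinct (drop (length b) xs)" using Cons.prems(1) by simp
  then obtain ps where ps: "drop (length b) xs = concat ps" "map std ps = bs"
    "sorted_wrt (\<lambda>p q. \<forall>x\<in>set p. \<forall>y\<in>set q. y < x) ps"
    using Cons.IH sp Cons.prems(3) by auto
  have A: "xs = concat (take (length b) xs # ps)" using ps(1) by (metis append_take_drop_id concat.simps(2))
  have B: "map std (take (length b) xs # ps) = b # bs" using sp ps by simp
  have C: "sorted_wrt (\<lambda>p q. \<forall>x\<in>set p. \<forall>y\<in>set q. y < x) (take (length b) xs # ps)"
  proof -
    have "\<forall>q\<in>set ps. \<forall>x\<in>set (take (length b) xs). \<forall>y\<in>set q. y < x"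
    proof (intro ballI)
      fix q x y assume "q \<in> set ps" "x \<in> set (take (length b) xs)" "y \<in> set q"
      then have "y \<in> set (drop (length b) xs)" using ps(1) by auto
      then show "y < x" using sp \<open>x \<in> set (take (length b) xs)\<close> by blast
    qed
    then show ?thesis using ps(3) by simp
  qed
  show ?case by (rule exI[of _ "take (length b) xs # ps"], intro conjI, rule A, rule B, rule C)
qed

lemma single_in_H:
  assumes "k \<ge> 2" shows "std [x] \<in> H_plus k"
proof -
  have "is_perm (std [x])" by (rule std_perm) simp
  moreover have "h_plus (std [x]) \<le> 1" using h_plus_le_length[of "std [x]"] by simp
  ultimately show ?thesis unfolding H_plus_def using assms by simp
qed

lemma greedy_len_props:
  assumes "k \<ge> 2" "xs \<noteq> []"
  shows "1 \<le> greedy_len k xs \<and> greedy_len k xs \<le> length xs \<and>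
         std (take (greedy_len k xs) xs) \<in> H_plus k \<union> H_minus k"
proof -
  let ?J = "{j. 1 \<le> j \<and> j \<le> length xs \<and> std (take j xs) \<in> H_plus k \<union> H_minus k}"
  have fin: "finite ?J" by (rule finite_subset[of _ "{..length xs}"]) auto
  have "take 1 xs = [hd xs]" using assms(2) by (cases xs) auto
  then have "1 \<in> ?J" using single_in_H[OF assms(1)] assms(2) by (simp add: Suc_le_eq)
  then have "?J \<noteq> {}" by blast
  then have "Max ?J \<in> ?J" using fin by (rule Max_in[rotated])
  then show ?thesis unfolding greedy_len_def by simp
qed

lemma greedy_segs:
  "k \<ge> 2 \<Longrightarrow> length xs \<le> f \<Longrightarrow>
   \<exists>segs. length segs = greedy_count f k xs \<and> concat segs = xs \<and>
      (\<forall>s\<in>set segs. s \<noteq> [] \<and> std s \<in> H_plus k \<union> H_minus k)"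
proof (induction f arbitrary: xs)
  case 0
  then show ?case by (intro exI[of _ "[]"]) simp
next
  case (Suc f)
  show ?case
  proof (cases "xs = []")
    case True then show ?thesis by (intro exI[of _ "[]"]) simp
  next
    case False
    let ?g = "greedy_len k xs"
    note g = greedy_len_props[OF Suc.prems(1) False]
    have "1 \<le> ?g" using g by blast
    then have "length (drop ?g xs) \<le> f" using Suc.prems(2) by simp
    then obtain segs where segs: "length segs = greedy_count f k (drop ?g xs)"
      "concat segs = drop ?g xs" "\<forall>s\<in>set segs. s \<noteq> [] \<and> std s \<in> H_plus k \<union> H_minus k"
      using Suc.IH Suc.prems(1) by blast
    have "take ?g xs \<noteq> []" using g False by simp
    then show ?thesis using segs g False
      by (intro exI[of _ "take ?g xs # segs"]) simp
  qed
qed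


type_synonym piece = "(nat \<times> nat) list \<times> bool"

definition pvals :: "piece \<Rightarrow> nat list" where
  "pvals q = map fst (fst q)"

definition plab :: "piece \<Rightarrow> nat list \<times> nat list \<times> bool" where
  "plab q = (std (pvals q), map snd (fst q), snd q)"

definition rule_lt :: "nat \<Rightarrow> nat \<Rightarrow> bool \<Rightarrow> bool" where
  "rule_lt r r' s = (if r \<noteq> r' then r < r' else s)"

definition compat :: "piece \<Rightarrow> piece \<Rightarrow> bool" where
  "compat a b \<longleftrightarrow> (\<forall>p\<in>set (fst a). \<forall>q\<in>set (fst b). (fst p < fst q \<longleftrightarrow> rule_lt (snd p) (snd q) (snd a)))"

definition pts :: "piece list \<Rightarrow> (nat \<times> nat) list" where
  "pts P = concat (map fst P)"

definition valid :: "piece list \<Rightarrow> bool" where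
  "valid P \<longleftrightarrow> sorted_wrt compat P \<and> distinct (map fst (pts P))"

lemma pts_simps [simp]: "pts [] = []" "pts (a # P) = fst a @ pts P"
  unfolding pts_def by simp_all

lemma concat_pvals: "concat (map pvals P) = map fst (pts P)"
  unfolding pts_def pvals_def by (induction P) simp_all

lemma subseq_distinct: "subseq xs ys \<Longrightarrow> distinct ys \<Longrightarrow> distinct xs"
proof (induction rule: list_emb.induct)
  case (list_emb_Cons2 x y xs ys)
  then show ?case using list_emb_set[OF list_emb_Cons2.hyps(2)] by auto
qed auto

lemma subseq_sorted_wrt: "subseq xs ys \<Longrightarrow> sorted_wrt R ys \<Longrightarrow> sorted_wrt R xs"
proof (induction rule: list_emb.induct)
  case (list_emb_Cons2 x y xs ys)
  have "\<forall>z\<in>set xs. z \<in> set ys"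
  proof
    fix z assume "z \<in> set xs"
    from list_emb_set[OF list_emb_Cons2.hyps(2) this] show "z \<in> set ys" by blast
  qed
  then show ?case using list_emb_Cons2 by auto
qed auto

lemma subseq_concat_map: "subseq xs ys \<Longrightarrow> subseq (concat (map f xs)) (concat (map f ys))"
proof (induction rule: list_emb.induct)
  case (list_emb_Cons xs ys y)
  then show ?case by (simp add: list_emb_append2)
next
  case (list_emb_Cons2 x y xs ys)
  then show ?case by (simp add: list_emb_append_mono)
qed simp

lemma valid_subseq: "subseq P' P \<Longrightarrow> valid P \<Longrightarrow> valid P'"
  unfolding valid_def
proof (intro conjI)
  assume a: "subseq P' P" "sorted_wrt compat P \<and> distinct (map fst (pts P))"
  show "sorted_wrt compat P'" using subseq_sorted_wrt a by blast
  have "subseq (map fst (pts P')) (map fst (pts P))"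
    using subseq_concat_map[OF a(1), of pvals] by (simp add: concat_pvals)
  then show "distinct (map fst (pts P'))" using subseq_distinct a by blast
qed

lemma order_iso_append:
  assumes "order_iso x1 x2" "order_iso y1 y2" "distinct (x1 @ y1)" "distinct (x2 @ y2)"
    and cross: "\<forall>i<length x1. \<forall>j<length y1. (x1 ! i < y1 ! j \<longleftrightarrow> x2 ! i < y2 ! j)"
  shows "order_iso (x1 @ y1) (x2 @ y2)"
proof -
  have l1: "length x1 = length x2" using assms(1) unfolding order_iso_def by simp
  have l2: "length y1 = length y2" using assms(2) unfolding order_iso_def by simp
  have cross2: "\<forall>i<length x1. \<forall>j<length y1. (y1 ! j < x1 ! i \<longleftrightarrow> y2 ! j < x2 ! i)"
  proof (intro allI impI)
    fix i j assume ij: "i < length x1" "j < length y1"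
    have "x1 ! i \<noteq> y1 ! j" using assms(3) ij by (auto dest: nth_mem)
    moreover have "x2 ! i \<noteq> y2 ! j" using assms(4) ij l1 l2 by (auto dest: nth_mem)
    moreover have "x1 ! i < y1 ! j \<longleftrightarrow> x2 ! i < y2 ! j" using cross ij by blast
    ultimately show "y1 ! j < x1 ! i \<longleftrightarrow> y2 ! j < x2 ! i" by auto
  qed
  show ?thesis unfolding order_iso_def
  proof (intro conjI allI impI)
    show "length (x1 @ y1) = length (x2 @ y2)" using l1 l2 by simp
  next
    fix i j assume ij: "i < length (x1 @ y1)" "j < length (x1 @ y1)"
    show "(x1 @ y1) ! i < (x1 @ y1) ! j \<longleftrightarrow> (x2 @ y2) ! i < (x2 @ y2) ! j"
    proof (cases "i < length x1")
      case ci: True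
      show ?thesis
      proof (cases "j < length x1")
        case True
        then show ?thesis using ci assms(1) l1 unfolding order_iso_def by (simp add: nth_append)
      next
        case False
        then have "j - length x1 < length y1" using ij by simp
        then show ?thesis using ci False cross l1 by (simp add: nth_append)
      qed
    next
      case ci: False
      then have i': "i - length x1 < length y1" using ij by simp
      show ?thesis
      proof (cases "j < length x1")
        case True
        then show ?thesis using ci True cross2 l1 i' by (simp add: nth_append)
      next
        case False
        then have "j - length x1 < length y1" using ij by simp
        then show ?thesis using ci False assms(2) l1 i' unfolding order_iso_def by (simp add: nth_append)
      qed
    qed
  qed
qed

lemma runs_pts: "map plab P = map plab Q \<Longrightarrow> map snd (pts P) = map snd (pts Q)"
proof (induction P arbitrary: Q)
  case Nil then show ?case by simp
next
  case (Cons a P)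
  then obtain b Q' where Q: "Q = b # Q'" by (cases Q) auto
  have "map snd (fst a) = map snd (fst b)" "map plab P = map plab Q'"
    using Cons.prems Q unfolding plab_def by simp_all
  then show ?case using Cons.IH Q by simp
qed

lemma length_pts: "map plab P = map plab Q \<Longrightarrow> length (pts P) = length (pts Q)"
  using runs_pts by (metis length_map)

lemma same_labels_iso:
  "valid P \<Longrightarrow> valid Q \<Longrightarrow> map plab P = map plab Q \<Longrightarrow>
   order_iso (map fst (pts P)) (map fst (pts Q))"
proof (induction P arbitrary: Q)
  case Nil
  then show ?case by (simp add: order_iso_def)
next
  case (Cons a P)
  then obtain b Q' where Q: "Q = b # Q'" by (cases Q) auto
  have la: "plab a = plab b" and lP: "map plab P = map plab Q'" using Cons.prems(3) Q by simp_all
  have vP: "valid P" and vQ: "valid Q'"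
    using Cons.prems(1,2) Q unfolding valid_def by auto
  have IH: "order_iso (map fst (pts P)) (map fst (pts Q'))" using Cons.IH vP vQ lP by blast
  have da: "distinct (map fst (fst a) @ map fst (pts P))"
    using Cons.prems(1) unfolding valid_def by simp
  have db: "distinct (map fst (fst b) @ map fst (pts Q'))"
    using Cons.prems(2) Q unfolding valid_def by simp
  have sa: "std (map fst (fst a)) = std (map fst (fst b))" and ra: "map snd (fst a) = map snd (fst b)"
    and sg: "snd a = snd b"
    using la unfolding plab_def pvals_def by simp_all
  have oab: "order_iso (map fst (fst a)) (map fst (fst b))"
    using std_eq_order_iso[OF _ _ sa] da db by simp
  have rP: "map snd (pts P) = map snd (pts Q')" using runs_pts[OF lP] .
  have lfa: "length (fst a) = length (fst b)" using ra by (metis length_map)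
  have lPQ: "length (pts P) = length (pts Q')" using rP by (metis length_map)
  have ca: "\<forall>c\<in>set P. compat a c" using Cons.prems(1) unfolding valid_def by simp
  have cb: "\<forall>c\<in>set Q'. compat b c" using Cons.prems(2) Q unfolding valid_def by simp
  have ka: "\<forall>p\<in>set (fst a). \<forall>q\<in>set (pts P). (fst p < fst q \<longleftrightarrow> rule_lt (snd p) (snd q) (snd a))"
    using ca unfolding compat_def pts_def by auto
  have kb: "\<forall>p\<in>set (fst b). \<forall>q\<in>set (pts Q'). (fst p < fst q \<longleftrightarrow> rule_lt (snd p) (snd q) (snd b))"
    using cb unfolding compat_def pts_def by auto
  have cross: "\<forall>i<length (map fst (fst a)). \<forall>j<length (map fst (pts P)).
     (map fst (fst a) ! i < map fst (pts P) ! j \<longleftrightarrow> map fst (fst b) ! i < map fst (pts Q') ! j)"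
  proof (intro allI impI)
    fix i j assume i: "i < length (map fst (fst a))" and j: "j < length (map fst (pts P))"
    have i': "i < length (fst a)" "i < length (fst b)" using i lfa by simp_all
    have j': "j < length (pts P)" "j < length (pts Q')" using j lPQ by simp_all
    have r1: "snd (fst a ! i) = snd (fst b ! i)" using ra i' by (metis nth_map)
    have r2: "snd (pts P ! j) = snd (pts Q' ! j)" using rP j' by (metis nth_map)
    have e1: "fst (fst a ! i) < fst (pts P ! j) \<longleftrightarrow> rule_lt (snd (fst a ! i)) (snd (pts P ! j)) (snd a)"
      using ka i' j' by (meson nth_mem)
    have e2: "fst (fst b ! i) < fst (pts Q' ! j) \<longleftrightarrow> rule_lt (snd (fst b ! i)) (snd (pts Q' ! j)) (snd b)"
      using kb i' j' by (meson nth_mem)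
    show "map fst (fst a) ! i < map fst (pts P) ! j \<longleftrightarrow> map fst (fst b) ! i < map fst (pts Q') ! j"
      using e1 e2 r1 r2 sg i' j' by simp
  qed
  have "order_iso (map fst (fst a) @ map fst (pts P)) (map fst (fst b) @ map fst (pts Q'))"
    by (rule order_iso_append[OF oab IH da db cross])
  then show ?case using Q by simp
qed

theorem labels_contain:
  assumes "valid P" "valid Q" "subseq (map plab Q) (map plab P)"
  shows "map fst (pts Q) \<prec> map fst (pts P)"
proof -
  obtain P' where P': "subseq P' P" "map plab Q = map plab P'"
    using subseq_map_inv[OF assms(3)] by blast
  have vP': "valid P'" using valid_subseq[OF P'(1) assms(1)] .
  have "order_iso (map fst (pts Q)) (map fst (pts P'))"
    using same_labels_iso[OF assms(2) vP' P'(2)] .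
  moreover have "subseq (map fst (pts P')) (map fst (pts P))"
    using subseq_concat_map[OF P'(1), of pvals] by (simp add: concat_pvals)
  ultimately show ?thesis unfolding contains_def by blast
qed


fun changes :: "nat list \<Rightarrow> nat" where
  "changes (x # y # zs) = (if x \<noteq> y then 1 else 0) + changes (y # zs)"
| "changes _ = 0"

fun alt :: "nat \<Rightarrow> nat \<Rightarrow> nat \<Rightarrow> nat list" where
  "alt x y 0 = []"
| "alt x y (Suc n) = x # alt y x n"

lemma changes_Cons: "ys \<noteq> [] \<Longrightarrow> changes (x # ys) = (if x \<noteq> hd ys then 1 else 0) + changes ys"
  by (cases ys) auto

lemma changes_append:
  "xs \<noteq> [] \<Longrightarrow> changes (xs @ ys) = changes xs + changes (last xs # ys)"
proof (induction xs)
  case Nil then show ?case by simp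
next
  case (Cons x xs)
  show ?case
  proof (cases "xs = []")
    case True then show ?thesis by simp
  next
    case False
    have "changes (x # (xs @ ys)) = (if x \<noteq> hd (xs @ ys) then 1 else 0) + changes (xs @ ys)"
      using False by (intro changes_Cons) simp
    moreover have "changes (x # xs) = (if x \<noteq> hd xs then 1 else 0) + changes xs"
      using False by (rule changes_Cons)
    ultimately show ?thesis using Cons.IH[OF False] False by simp
  qed
qed

lemma changes_pos: "x \<noteq> last (x # ys) \<Longrightarrow> 0 < changes (x # ys)"
proof (induction ys arbitrary: x)
  case Nil then show ?case by simp
next
  case (Cons y ys)
  show ?case
  proof (cases "x = y")
    case True
    then show ?thesis using Cons by simp
  next
    case False then show ?thesis by simp
  qed
qed

lemma changes_prefix_le: "changes xs \<le> changes (xs @ ys)"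
  by (cases "xs = []") (simp_all add: changes_append)

lemma alt_nth: "i < n \<Longrightarrow> alt x y n ! i = (if even i then x else y)"
proof (induction n arbitrary: x y i)
  case 0 then show ?case by simp
next
  case (Suc n)
  show ?case
  proof (cases i)
    case 0 then show ?thesis by simp
  next
    case (Suc j)
    then show ?thesis using Suc.IH[of j y x] Suc.prems by simp
  qed
qed

lemma length_alt [simp]: "length (alt x y n) = n"
  by (induction n arbitrary: x y) auto

lemma alt_prefix: "m \<le> n \<Longrightarrow> prefix (alt x y m) (alt x y n)"
proof (induction m arbitrary: x y n)
  case 0 then show ?case by simp
next
  case (Suc m)
  then obtain n' where "n = Suc n'" by (cases n) auto
  then show ?case using Suc by simp
qed

lemma alt_subseq_filter:
  "x \<noteq> y \<Longrightarrow> set (x # u) \<subseteq> {x, y} \<Longrightarrow> subseq (alt x y (Suc (changes (x # u)))) (x # u)"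
proof (induction u arbitrary: x y)
  case Nil then show ?case by simp
next
  case (Cons z u)
  show ?case
  proof (cases "z = x")
    case True
    then have "subseq (alt x y (Suc (changes (x # u)))) (x # u)"
      using Cons.IH[of x y] Cons.prems by simp
    then show ?thesis using True by (simp add: list_emb_Cons)
  next
    case False
    then have zy: "z = y" using Cons.prems by auto
    have "subseq (alt y x (Suc (changes (y # u)))) (y # u)"
      using Cons.IH[of y x] Cons.prems zy by auto
    then show ?thesis using zy Cons.prems(1) by simp
  qed
qed

definition fpair :: "nat \<times> nat \<Rightarrow> nat list \<Rightarrow> nat list" where
  "fpair p w = filter (\<lambda>c. c = fst p \<or> c = snd p) w"

definition pairs :: "nat \<Rightarrow> (nat \<times> nat) set" where
  "pairs r = {(a, b). a < b \<and> b < r}"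

lemma finite_pairs: "finite (pairs r)"
  by (rule finite_subset[of _ "{..<r} \<times> {..<r}"]) (auto simp: pairs_def)

lemma card_pairs: "card (pairs r) \<le> r * r"
proof -
  have "card (pairs r) \<le> card ({..<r} \<times> {..<r})"
    by (rule card_mono) (auto simp: pairs_def)
  then show ?thesis by (simp add: card_cartesian_product)
qed

lemma changes_filter_step:
  assumes "ys \<noteq> []"
  shows "changes (fpair p ys) + (if x \<noteq> hd ys \<and> p = (min x (hd ys), max x (hd ys)) then 1 else 0)
         \<le> changes (fpair p (x # ys))"
proof (cases "x = fst p \<or> x = snd p")
  case False
  then have "p \<noteq> (min x (hd ys), max x (hd ys))" by (cases p) (auto simp: min_def max_def)
  then show ?thesis using False by (simp add: fpair_def)
next
  case xin: True
  have e: "fpair p (x # ys) = x # fpair p ys" using xin by (simp add: fpair_def)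
  show ?thesis
  proof (cases "fpair p ys = []")
    case True
    then have "\<not> (x \<noteq> hd ys \<and> p = (min x (hd ys), max x (hd ys)))"
      using assms by (cases ys) (auto simp: fpair_def min_def max_def split: if_splits)
    then show ?thesis using True e by simp
  next
    case ne: False
    have c: "changes (x # fpair p ys) = (if x \<noteq> hd (fpair p ys) then 1 else 0) + changes (fpair p ys)"
      using ne by (rule changes_Cons)
    show ?thesis
    proof (cases "x \<noteq> hd ys \<and> p = (min x (hd ys), max x (hd ys))")
      case True
      then have "hd ys = fst p \<or> hd ys = snd p" by (auto simp: min_def max_def)
      then have "hd (fpair p ys) = hd ys" using assms by (cases ys) (auto simp: fpair_def)
      then show ?thesis using True c e by simp
    next
      case False
      have z: "(if x \<noteq> hd ys \<and> p = (min x (hd ys), max x (hd ys)) then 1 else 0) = (0::nat)"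
        by (rule if_not_P[OF False])
      show ?thesis unfolding z e c by simp
    qed
  qed
qed

lemma changes_le_pairs:
  "set w \<subseteq> {..<r} \<Longrightarrow> changes w \<le> (\<Sum>p\<in>pairs r. changes (fpair p w))"
proof (induction w)
  case Nil then show ?case by simp
next
  case (Cons x ys)
  show ?case
  proof (cases "ys = []")
    case True then show ?thesis by simp
  next
    case ne: False
    let ?y = "hd ys"
    let ?q = "(min x ?y, max x ?y)"
    have IH: "changes ys \<le> (\<Sum>p\<in>pairs r. changes (fpair p ys))" using Cons by simp
    have "x < r" "?y < r" using Cons.prems ne by (auto, cases ys, auto)
    have "(\<Sum>p\<in>pairs r. changes (fpair p ys) + (if x \<noteq> ?y \<and> p = ?q then 1 else 0))
          \<le> (\<Sum>p\<in>pairs r. changes (fpair p (x # ys)))"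
      by (rule sum_mono) (rule changes_filter_step[OF ne])
    moreover have "(\<Sum>p\<in>pairs r. changes (fpair p ys) + (if x \<noteq> ?y \<and> p = ?q then 1 else 0))
          = (\<Sum>p\<in>pairs r. changes (fpair p ys)) + (if x \<noteq> ?y then 1 else 0)"
    proof -
      have "(\<Sum>p\<in>pairs r. (if x \<noteq> ?y \<and> p = ?q then 1 else 0::nat)) = (if x \<noteq> ?y then 1 else 0)"
      proof (cases "x \<noteq> ?y")
        case True
        then have "?q \<in> pairs r" using \<open>x < r\<close> \<open>?y < r\<close> by (auto simp: pairs_def min_def max_def)
        then show ?thesis using True finite_pairs by simp
      next
        case False then show ?thesis by simp
      qed
      then show ?thesis by (simp add: sum.distrib)
    qed
    moreover have "changes (x # ys) = (if x \<noteq> ?y then 1 else 0) + changes ys"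
      using ne by (rule changes_Cons)
    ultimately show ?thesis using IH by linarith
  qed
qed

lemma many_changes_alt:
  assumes "set w \<subseteq> {..<r}" "r * r * K < changes w"
  shows "\<exists>hi lo. lo < hi \<and> subseq (alt hi lo K) w"
proof (cases "K = 0")
  case True
  then show ?thesis by (intro exI[of _ 1] exI[of _ 0]) simp
next
  case K0: False
  have "\<exists>p\<in>pairs r. K \<le> changes (fpair p w)"
  proof (rule ccontr)
    assume "\<not> ?thesis"
    then have "\<forall>p\<in>pairs r. changes (fpair p w) \<le> K" by auto
    then have "(\<Sum>p\<in>pairs r. changes (fpair p w)) \<le> card (pairs r) * K"
      using sum_bounded_above[of "pairs r" "\<lambda>p. changes (fpair p w)" K] by simp
    also have "\<dots> \<le> r * r * K" using card_pairs by simp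
    finally show False using changes_le_pairs[OF assms(1)] assms(2) by simp
  qed
  then obtain a b where ab: "a < b" "K \<le> changes (fpair (a, b) w)" unfolding pairs_def by auto
  let ?u = "fpair (a, b) w"
  have une: "?u \<noteq> []" using ab K0 by (cases ?u) auto
  then obtain x u' where xu: "?u = x # u'" by (cases ?u) auto
  have sx: "set ?u \<subseteq> {a, b}" by (auto simp: fpair_def)
  define y where "y = (if x = a then b else a)"
  have xy: "x \<noteq> y" "set (x # u') \<subseteq> {x, y}" using sx xu ab unfolding y_def by auto
  have "subseq (alt x y (Suc (changes (x # u')))) (x # u')" by (rule alt_subseq_filter[OF xy])
  moreover have "subseq ?u w" unfolding fpair_def by simp
  ultimately have s1: "subseq (alt x y (Suc (changes (x # u')))) w" using xu subseq_order.trans by metis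
  have "prefix (alt x y (Suc K)) (alt x y (Suc (changes (x # u'))))"
    using ab xu by (intro alt_prefix) simp
  then have s2: "subseq (alt x y (Suc K)) w" using s1 prefix_imp_subseq subseq_order.trans by blast
  show ?thesis
  proof (cases "y < x")
    case True
    have "prefix (alt x y K) (alt x y (Suc K))" by (rule alt_prefix) simp
    then have "subseq (alt x y K) w" using s2 prefix_imp_subseq subseq_order.trans by blast
    then show ?thesis using True by blast
  next
    case False
    then have "x < y" using xy by simp
    have "subseq (alt y x K) (x # alt y x K)" by (rule list_emb_Cons) simp
    then have "subseq (alt y x K) (alt x y (Suc K))" by simp
    then have "subseq (alt y x K) w" using s2 subseq_order.trans by blast
    then show ?thesis using \<open>x < y\<close> by blast
  qed
qed


locale segsetup =
  fixes pi :: "nat list" and segs :: "nat list list"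
  assumes perm: "is_perm pi" and cat: "concat segs = pi"
begin

definition col :: "nat \<Rightarrow> nat" where
  "col v = (LEAST j. j < length segs \<and> v \<in> set (segs ! j))"

definition cw :: "nat list" where
  "cw = map col [0..<length pi]"

definition run :: "nat \<Rightarrow> nat" where
  "run v = changes (take (Suc v) cw)"

definition ipf :: "nat \<Rightarrow> nat" where
  "ipf v = (THE i. i < length pi \<and> pi ! i = v)"

lemma dist: "distinct pi" using perm unfolding is_perm_def by simp

lemma set_pi: "set pi = {0..<length pi}" using perm unfolding is_perm_def by simp

lemma split_at:
  assumes "j < length segs"
  shows "pi = concat (take j segs) @ segs ! j @ concat (drop (Suc j) segs)"
proof -
  have "drop j segs = segs ! j # drop (Suc j) segs" using assms by (simp add: Cons_nth_drop_Suc)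
  then have "concat (drop j segs) = segs ! j @ concat (drop (Suc j) segs)" by simp
  moreover have "pi = concat (take j segs) @ concat (drop j segs)"
    using cat by (metis append_take_drop_id concat_append)
  ultimately show ?thesis by simp
qed

lemma two_segs:
  assumes ij: "i < j" "j < length segs" and x: "x \<in> set (segs ! i)" and y: "y \<in> set (segs ! j)"
  shows "\<exists>p q. p < q \<and> q < length pi \<and> pi ! p = x \<and> pi ! q = y"
proof -
  let ?A = "concat (take j segs)"
  let ?B = "segs ! j @ concat (drop (Suc j) segs)"
  have pe: "pi = ?A @ ?B" using split_at[OF ij(2)] by simp
  have "segs ! i \<in> set (take j segs)" using ij
    by (metis in_set_conv_nth length_take min.absorb4 nth_take order.strict_trans)
  then have "x \<in> set ?A" using x by auto
  then obtain p where p: "p < length ?A" "?A ! p = x" by (metis in_set_conv_nth)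
  have "y \<in> set ?B" using y by simp
  then obtain q where q: "q < length ?B" "?B ! q = y" by (metis in_set_conv_nth)
  have "pi ! p = x" using pe p by (simp add: nth_append)
  moreover have "pi ! (length ?A + q) = y" using pe q by (simp add: nth_append)
  moreover have "length ?A + q < length pi" using pe q by simp
  ultimately show ?thesis using p(1) by (intro exI[of _ p] exI[of _ "length ?A + q"]) simp
qed

lemma segs_disj:
  assumes "i < j" "j < length segs" "x \<in> set (segs ! i)" "x \<in> set (segs ! j)"
  shows False
proof -
  obtain p q where pq: "p < q" "q < length pi" "pi ! p = x" "pi ! q = x"
    using two_segs[OF assms] by blast
  then have "p < length pi" by simp
  then have "p = q" using nth_eq_iff_index_eq[OF dist, of p q] pq by simp
  then show False using pq(1) by simp
qed

lemma col_eq: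
  assumes "i < length segs" "x \<in> set (segs ! i)"
  shows "col x = i"
  unfolding col_def
proof (rule Least_equality)
  show "i < length segs \<and> x \<in> set (segs ! i)" using assms by simp
next
  fix j assume j: "j < length segs \<and> x \<in> set (segs ! j)"
  show "i \<le> j"
  proof (rule ccontr)
    assume "\<not> i \<le> j"
    then have "j < i" by simp
    then show False using segs_disj[of j i x] assms j by blast
  qed
qed

lemma in_some_seg:
  assumes "x \<in> set pi"
  shows "col x < length segs \<and> x \<in> set (segs ! col x)"
proof -
  from assms cat obtain s where "s \<in> set segs" "x \<in> set s" by auto
  then obtain i where "i < length segs" "segs ! i = s" by (auto simp: in_set_conv_nth)
  then show ?thesis using col_eq \<open>x \<in> set s\<close> by auto
qed

lemma ipf_props:
  assumes "v < length pi"
  shows "ipf v < length pi \<and> pi ! ipf v = v"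
proof -
  have "v \<in> set pi" using assms set_pi by simp
  then obtain i where i: "i < length pi" "pi ! i = v" by (auto simp: in_set_conv_nth)
  have "\<exists>!i. i < length pi \<and> pi ! i = v"
  proof (rule ex1I[of _ i])
    show "i < length pi \<and> pi ! i = v" using i by simp
  next
    fix j assume j: "j < length pi \<and> pi ! j = v"
    then show "j = i" using i nth_eq_iff_index_eq[OF dist, of j i] by simp
  qed
  then show ?thesis unfolding ipf_def by (rule theI')
qed

lemma ipf_eq:
  assumes "p < length pi" shows "ipf (pi ! p) = p"
proof -
  have "pi ! p < length pi" using assms set_pi nth_mem by fastforce
  then have "ipf (pi ! p) < length pi" "pi ! ipf (pi ! p) = pi ! p" using ipf_props by auto
  then show ?thesis using assms dist by (simp add: nth_eq_iff_index_eq)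
qed

lemma col_pos:
  assumes "x \<in> set pi" "y \<in> set pi" "col x < col y"
  shows "ipf x < ipf y"
proof -
  note sx = in_some_seg[OF assms(1)] and sy = in_some_seg[OF assms(2)]
  obtain p q where "p < q" "q < length pi" "pi ! p = x" "pi ! q = y"
    using two_segs[OF assms(3) conjunct1[OF sy] conjunct2[OF sx] conjunct2[OF sy]] by blast
  then show ?thesis using ipf_eq[of p] ipf_eq[of q] by simp
qed

lemma inv_perm_eq: "inv_perm pi = map ipf [0..<length pi]"
  unfolding inv_perm_def ipf_def by simp

lemma length_cw [simp]: "length cw = length pi" unfolding cw_def by simp

lemma cw_nth: "u < length pi \<Longrightarrow> cw ! u = col u" unfolding cw_def by simp

lemma set_cw: "set cw \<subseteq> {..<length segs}"
proof
  fix c assume "c \<in> set cw"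
  then obtain u where "u < length pi" "c = col u" unfolding cw_def by auto
  then show "c \<in> {..<length segs}" using in_some_seg[of u] set_pi by auto
qed

lemma run_le: "u \<le> v \<Longrightarrow> run u \<le> run v"
proof -
  assume uv: "u \<le> v"
  have "take (Suc v) cw = take (Suc u) cw @ drop (Suc u) (take (Suc v) cw)"
    using uv by (metis append_take_drop_id min.absorb1 Suc_le_mono take_take)
  then show ?thesis unfolding run_def by (metis changes_prefix_le)
qed

lemma run_bound: "run v \<le> changes cw"
  unfolding run_def using changes_prefix_le[of "take (Suc v) cw" "drop (Suc v) cw"] by simp

lemma run_strict:
  assumes "u < v" "v < length pi" "col u \<noteq> col v"
  shows "run u < run v"
proof -
  let ?X = "take (Suc u) cw" and ?Y = "drop (Suc u) (take (Suc v) cw)"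
  have e: "take (Suc v) cw = ?X @ ?Y"
    using assms(1) by (metis append_take_drop_id min.absorb1 Suc_le_mono less_imp_le take_take)
  have "0 < length cw" using assms by (simp only: length_cw)
  then have Xne: "?X \<noteq> []" by (simp del: length_cw)
  have lX: "last ?X = col u"
    using assms by (simp add: take_Suc_conv_app_nth cw_nth)
  have Yne: "?Y \<noteq> []" using assms by simp
  have "last (?X @ ?Y) = col v"
    using e assms(2) by (metis last_snoc take_Suc_conv_app_nth length_cw cw_nth)
  then have "last (last ?X # ?Y) = col v" using Yne by simp
  then have "0 < changes (last ?X # ?Y)" using lX assms(3) changes_pos by metis
  moreover have "changes (?X @ ?Y) = changes ?X + changes (last ?X # ?Y)"
    using Xne by (rule changes_append)
  ultimately show ?thesis unfolding run_def using e by simp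
qed

lemma run_order:
  assumes "x \<noteq> y" "run x \<noteq> run y"
  shows "x < y \<longleftrightarrow> run x < run y"
proof
  assume "x < y" then show "run x < run y" using run_le[of x y] assms(2) by simp
next
  assume "run x < run y"
  then show "x < y" using run_le[of y x] by (meson linorder_not_le order.strict_iff_not)
qed

lemma run_col:
  assumes "x < length pi" "y < length pi" "col x \<noteq> col y"
  shows "run x \<noteq> run y"
proof -
  have "x \<noteq> y" using assms(3) by auto
  then have "x < y \<or> y < x" by auto
  then show ?thesis
  proof
    assume "x < y" then show ?thesis using run_strict[of x y] assms by simp
  next
    assume "y < x" then show ?thesis using run_strict[of y x] assms by simp
  qed
qed

lemma al_finite: "finite {length \<sigma> | \<sigma>. is_perm \<sigma> \<and> alternating \<sigma> \<and> (\<sigma> \<prec> pi \<or> \<sigma> \<prec> inv_perm pi)}"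
proof (rule finite_subset[of _ "{..length pi}"])
  show "{length \<sigma> | \<sigma>. is_perm \<sigma> \<and> alternating \<sigma> \<and> (\<sigma> \<prec> pi \<or> \<sigma> \<prec> inv_perm pi)} \<subseteq> {..length pi}"
  proof
    fix x assume "x \<in> {length \<sigma> | \<sigma>. is_perm \<sigma> \<and> alternating \<sigma> \<and> (\<sigma> \<prec> pi \<or> \<sigma> \<prec> inv_perm pi)}"
    then obtain \<sigma> where "x = length \<sigma>" "\<sigma> \<prec> pi \<or> \<sigma> \<prec> inv_perm pi" by blast
    moreover have "length (inv_perm pi) = length pi" by (simp add: inv_perm_def)
    ultimately show "x \<in> {..length pi}" using contains_length by fastforce
  qed
qed simp

lemma alt_to_al:
  assumes "lo < hi" "subseq (alt hi lo K) cw"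
  shows "K \<le> al pi"
proof -
  obtain vs where vs: "subseq vs [0..<length pi]" "alt hi lo K = map col vs"
    using subseq_map_inv[of "alt hi lo K" col "[0..<length pi]"] assms(2) unfolding cw_def by blast
  have lvs: "length vs = K" using vs(2) by (metis length_alt length_map)
  have vsn: "\<forall>v\<in>set vs. v < length pi"
  proof
    fix v assume "v \<in> set vs"
    from list_emb_set[OF vs(1) this] show "v < length pi" by auto
  qed
  have dvs: "distinct vs" using subseq_distinct[OF vs(1)] by simp
  let ?ys = "map ipf vs"
  have sub: "subseq ?ys (inv_perm pi)" unfolding inv_perm_eq by (rule subseq_map[OF vs(1)])
  have dys: "distinct ?ys"
  proof -
    have "inj_on ipf (set vs)"
    proof (rule inj_onI)
      fix a b assume "a \<in> set vs" "b \<in> set vs" "ipf a = ipf b"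
      then show "a = b" using ipf_props[of a] ipf_props[of b] vsn by metis
    qed
    then show ?thesis using dvs by (simp add: distinct_map)
  qed
  define \<sigma> where "\<sigma> = std ?ys"
  have ps: "is_perm \<sigma>" unfolding \<sigma>_def by (rule std_perm[OF dys])
  have ls: "length \<sigma> = K" unfolding \<sigma>_def using lvs by simp
  have oi: "order_iso ?ys \<sigma>" unfolding \<sigma>_def by (rule order_iso_std)
  have altc: "alternating \<sigma>"
    unfolding alternating_def
  proof (intro allI impI)
    fix i j assume i: "i < length \<sigma>" and j: "j < length \<sigma>" and ev: "even i \<and> odd j"
    have ci: "col (vs ! i) = hi" using vs(2) alt_nth[of i K hi lo] i ls lvs ev by (metis nth_map)
    have cj: "col (vs ! j) = lo" using vs(2) alt_nth[of j K hi lo] j ls lvs ev by (metis nth_map)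
    have "vs ! i \<in> set pi" "vs ! j \<in> set pi" using vsn i j ls lvs set_pi by auto
    then have "ipf (vs ! j) < ipf (vs ! i)" using col_pos ci cj assms(1) by simp
    then have "?ys ! j < ?ys ! i" using i j ls lvs by simp
    then show "\<sigma> ! j < \<sigma> ! i" using oi i j ls lvs unfolding order_iso_def by simp
  qed
  have "\<sigma> \<prec> inv_perm pi" unfolding contains_def using sub order_iso_sym[OF oi] by blast
  then have "length \<sigma> \<in> {length \<sigma> | \<sigma>. is_perm \<sigma> \<and> alternating \<sigma> \<and> (\<sigma> \<prec> pi \<or> \<sigma> \<prec> inv_perm pi)}"
    using ps altc by blast
  then have "length \<sigma> \<le> al pi" unfolding al_def using al_finite by (intro Max_ge)
  then show ?thesis using ls by simp
qed

lemma changes_bound: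
  assumes "al pi < K" "length segs < K"
  shows "changes cw \<le> K * K * K"
proof (rule ccontr)
  assume "\<not> ?thesis"
  then have "length segs * length segs * K < changes cw"
    using assms(2) by (meson le_less_trans less_imp_le mult_le_mono1 mult_le_mono not_le)
  then obtain hi lo where "lo < hi" "subseq (alt hi lo K) cw"
    using many_changes_alt[OF set_cw] by blast
  then show False using alt_to_al assms(1) by fastforce
qed

end


lemma seg_pieces:
  assumes d: "distinct s" and h: "std s \<in> H_plus k \<union> H_minus k"
  shows "\<exists>ps sg. s = concat ps \<and> (\<forall>p\<in>set ps. length p < k) \<and>
     sorted_wrt (\<lambda>p q. \<forall>x\<in>set p. \<forall>y\<in>set q. x \<noteq> y \<and> (x < y) = sg) ps"
  using h
proof
  assume "std s \<in> H_plus k"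
  then obtain bs where bs: "std s = foldr dsum bs []" "\<forall>b\<in>set bs. is_perm b \<and> length b < k"
    using H_plus_blocks by blast
  then obtain ps where ps: "s = concat ps" "map std ps = bs"
    "sorted_wrt (\<lambda>p q. \<forall>x\<in>set p. \<forall>y\<in>set q. x < y) ps"
    using blocks_split_plus[OF d] by blast
  have "\<forall>p\<in>set ps. length p < k"
  proof
    fix p assume "p \<in> set ps"
    then have "std p \<in> set bs" using ps(2) by auto
    then show "length p < k" using bs(2) by fastforce
  qed
  moreover have "sorted_wrt (\<lambda>p q. \<forall>x\<in>set p. \<forall>y\<in>set q. x \<noteq> y \<and> (x < y) = True) ps"
    using ps(3) by (rule sorted_wrt_mono_rel[rotated]) auto
  ultimately show ?thesis using ps(1) by blast
next
  assume "std s \<in> H_minus k"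
  then obtain bs where bs: "std s = foldr ssum bs []" "\<forall>b\<in>set bs. is_perm b \<and> length b < k"
    using H_minus_blocks by blast
  then obtain ps where ps: "s = concat ps" "map std ps = bs"
    "sorted_wrt (\<lambda>p q. \<forall>x\<in>set p. \<forall>y\<in>set q. y < x) ps"
    using blocks_split_minus[OF d] by blast
  have "\<forall>p\<in>set ps. length p < k"
  proof
    fix p assume "p \<in> set ps"
    then have "std p \<in> set bs" using ps(2) by auto
    then show "length p < k" using bs(2) by fastforce
  qed
  moreover have "sorted_wrt (\<lambda>p q. \<forall>x\<in>set p. \<forall>y\<in>set q. x \<noteq> y \<and> (x < y) = False) ps"
  proof (rule sorted_wrt_mono_rel[rotated])
    show "sorted_wrt (\<lambda>p q. \<forall>x\<in>set p. \<forall>y\<in>set q. y < x) ps" by (rule ps(3))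
  next
    fix p q :: "nat list" assume pq: "\<forall>x\<in>set p. \<forall>y\<in>set q. y < x"
    show "\<forall>x\<in>set p. \<forall>y\<in>set q. x \<noteq> y \<and> (x < y) = False"
    proof (intro ballI)
      fix x y assume "x \<in> set p" "y \<in> set q"
      then have "y < x" using pq by blast
      then show "x \<noteq> y \<and> (x < y) = False" by simp
    qed
  qed
  ultimately show ?thesis using ps(1) by blast
qed

lemma pts_concat: "pts (concat Ls) = concat (map pts Ls)"
  by (induction Ls) (simp_all add: pts_def)

lemma sorted_wrt_concat:
  "sorted_wrt R (concat Ls) \<longleftrightarrow>
   (\<forall>L\<in>set Ls. sorted_wrt R L) \<and> sorted_wrt (\<lambda>L L'. \<forall>a\<in>set L. \<forall>b\<in>set L'. R a b) Ls"
  by (induction Ls) (auto simp: sorted_wrt_append)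

definition LabSet :: "nat \<Rightarrow> nat \<Rightarrow> (nat list \<times> nat list \<times> bool) set" where
  "LabSet k B = {b. set b \<subseteq> {..k} \<and> length b \<le> k} \<times> ({R. set R \<subseteq> {..B} \<and> length R \<le> k} \<times> UNIV)"

lemma finite_LabSet: "finite (LabSet k B)"
  unfolding LabSet_def
  by (intro finite_cartesian_product finite_lists_length_le) simp_all

lemma std_vals_le: "set (std p) \<subseteq> {..length p}"
proof
  fix v assume "v \<in> set (std p)"
  then obtain i where i: "i < length p" "v = std p ! i" by (metis in_set_conv_nth std_length)
  have "card {y \<in> set p. y < p ! i} \<le> card (set p)" by (rule card_mono) auto
  also have "\<dots> \<le> length p" by (rule card_length)
  finally show "v \<in> {..length p}" using i by (simp add: std_nth)
qed

locale segsetup2 = segsetup +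
  fixes PS :: "nat \<Rightarrow> nat list list" and SG :: "nat \<Rightarrow> bool" and k :: nat
  assumes segPS: "i < length segs \<Longrightarrow> segs ! i = concat (PS i)"
    and lenPS: "i < length segs \<Longrightarrow> p \<in> set (PS i) \<Longrightarrow> length p < k"
    and sortPS: "i < length segs \<Longrightarrow>
        sorted_wrt (\<lambda>p q. \<forall>x\<in>set p. \<forall>y\<in>set q. x \<noteq> y \<and> (x < y) = SG i) (PS i)"
begin

definition mk :: "nat \<Rightarrow> nat list \<Rightarrow> piece" where
  "mk i p = (map (\<lambda>v. (v, run v)) p, SG i)"

definition G :: "nat \<Rightarrow> piece list" where
  "G i = map (mk i) (PS i)"

definition PP :: "piece list" where
  "PP = concat (map G [0..<length segs])"

lemma pts_G': "pts (G i) = map (\<lambda>v. (v, run v)) (concat (PS i))"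
proof -
  have "pts (map (mk i) ps) = map (\<lambda>v. (v, run v)) (concat ps)" for ps
    unfolding mk_def by (induction ps) simp_all
  then show ?thesis unfolding G_def by simp
qed

lemma pts_PP: "pts PP = map (\<lambda>v. (v, run v)) pi"
proof -
  have "pts PP = concat (map (\<lambda>i. pts (G i)) [0..<length segs])"
    unfolding PP_def pts_concat by (simp add: comp_def)
  also have "\<dots> = concat (map (\<lambda>i. map (\<lambda>v. (v, run v)) (segs ! i)) [0..<length segs])"
    using segPS pts_G' by (intro arg_cong[where f = concat] map_cong) simp_all
  also have "\<dots> = map (\<lambda>v. (v, run v)) (concat (map (\<lambda>i. segs ! i) [0..<length segs]))"
    by (simp add: map_concat comp_def)
  also have "\<dots> = map (\<lambda>v. (v, run v)) pi" using cat by (simp add: map_nth)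
  finally show ?thesis .
qed

lemma fst_pts_PP: "map fst (pts PP) = pi"
  using pts_PP by (simp add: comp_def)

lemma pt_in_seg:
  assumes "i < length segs" "p \<in> set (PS i)" "x \<in> set p"
  shows "x \<in> set (segs ! i)"
  using assms segPS by auto

lemma seg_in_pi: "i < length segs \<Longrightarrow> x \<in> set (segs ! i) \<Longrightarrow> x \<in> set pi"
  using cat by (metis in_set_conv_nth UN_I set_concat)

lemma in_pi_lt: "x \<in> set pi \<Longrightarrow> x < length pi"
  using set_pi by auto

lemma compat_same:
  assumes i: "i < length segs" and pq: "\<forall>x\<in>set p. \<forall>y\<in>set q. x \<noteq> y \<and> (x < y) = SG i"
  shows "compat (mk i p) (mk i q)"
  unfolding compat_def mk_def
proof (intro ballI)
  fix a b assume a: "a \<in> set (fst (map (\<lambda>v. (v, run v)) p, SG i))"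
    and b: "b \<in> set (fst (map (\<lambda>v. (v, run v)) q, SG i))"
  then obtain x y where xy: "x \<in> set p" "y \<in> set q" "a = (x, run x)" "b = (y, run y)" by auto
  have r: "x \<noteq> y" "(x < y) = SG i" using pq xy by auto
  show "(fst a < fst b) = rule_lt (snd a) (snd b) (snd (map (\<lambda>v. (v, run v)) p, SG i))"
  proof (cases "run x = run y")
    case True then show ?thesis using xy r by (simp add: rule_lt_def)
  next
    case False then show ?thesis using xy run_order[OF r(1) False] by (simp add: rule_lt_def)
  qed
qed

lemma compat_diff:
  assumes ij: "i < j" "j < length segs" and p: "p \<in> set (PS i)" and q: "q \<in> set (PS j)"
  shows "compat (mk i p) (mk j q)"
  unfolding compat_def mk_def
proof (intro ballI)
  fix a b assume a: "a \<in> set (fst (map (\<lambda>v. (v, run v)) p, SG i))"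
    and b: "b \<in> set (fst (map (\<lambda>v. (v, run v)) q, SG j))"
  then obtain x y where xy: "x \<in> set p" "y \<in> set q" "a = (x, run x)" "b = (y, run y)" by auto
  have i: "i < length segs" using ij by simp
  have sx: "x \<in> set (segs ! i)" using pt_in_seg[OF i p xy(1)] .
  have sy: "y \<in> set (segs ! j)" using pt_in_seg[OF ij(2) q xy(2)] .
  have cx: "col x = i" using col_eq[OF i sx] .
  have cy: "col y = j" using col_eq[OF ij(2) sy] .
  have "x < length pi" "y < length pi" using seg_in_pi sx sy i ij(2) in_pi_lt by blast+
  then have rn: "run x \<noteq> run y" using run_col cx cy ij(1) by simp
  have "x \<noteq> y" using cx cy ij(1) by auto
  then show "(fst a < fst b) = rule_lt (snd a) (snd b) (snd (map (\<lambda>v. (v, run v)) p, SG i))"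
    using xy run_order[OF _ rn] rn by (simp add: rule_lt_def)
qed

lemma valid_PP: "valid PP"
  unfolding valid_def
proof
  show "distinct (map fst (pts PP))" using fst_pts_PP dist by simp
  show "sorted_wrt compat PP"
    unfolding PP_def sorted_wrt_concat
  proof
    show "\<forall>L\<in>set (map G [0..<length segs]). sorted_wrt compat L"
    proof
      fix L assume "L \<in> set (map G [0..<length segs])"
      then obtain i where i: "i < length segs" "L = G i" by auto
      have "sorted_wrt (\<lambda>p q. compat (mk i p) (mk i q)) (PS i)"
        using sortPS[OF i(1)] by (rule sorted_wrt_mono_rel[rotated]) (rule compat_same[OF i(1)])
      then show "sorted_wrt compat L" unfolding i(2) G_def by (simp add: sorted_wrt_map)
    qed
  next
    have "sorted_wrt (\<lambda>i j. \<forall>a\<in>set (G i). \<forall>b\<in>set (G j). compat a b) [0..<length segs]"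
    proof (rule sorted_wrt_mono_rel[rotated])
      show "sorted_wrt (<) [0..<length segs]" by simp
    next
      fix i j assume "i \<in> set [0..<length segs]" "j \<in> set [0..<length segs]" "i < j"
      then have ij: "i < j" "j < length segs" by auto
      show "\<forall>a\<in>set (G i). \<forall>b\<in>set (G j). compat a b"
        unfolding G_def using compat_diff[OF ij] by auto
    qed
    then show "sorted_wrt (\<lambda>L L'. \<forall>a\<in>set L. \<forall>b\<in>set L'. compat a b) (map G [0..<length segs])"
      by (simp add: sorted_wrt_map)
  qed
qed

lemma labels_PP: "set (map plab PP) \<subseteq> LabSet k (changes cw)"
proof
  fix l assume "l \<in> set (map plab PP)"
  then obtain i p where ip: "i < length segs" "p \<in> set (PS i)" "l = plab (mk i p)"
    unfolding PP_def G_def by auto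
  have lp: "length p < k" using lenPS ip by simp
  have e: "l = (std p, map run p, SG i)"
    using ip(3) unfolding plab_def mk_def pvals_def by (simp add: comp_def)
  have "{..length p} \<subseteq> {..k}" using lp by simp
  then have A1: "set (std p) \<subseteq> {..k}" using std_vals_le[of p] by (rule subset_trans[rotated])
  have A2: "length (std p) \<le> k" using lp by simp
  have B1: "set (map run p) \<subseteq> {..changes cw}"
  proof
    fix r assume "r \<in> set (map run p)"
    then obtain v where "r = run v" by auto
    then show "r \<in> {..changes cw}" using run_bound[of v] by simp
  qed
  have B2: "length (map run p) \<le> k" using lp by simp
  have "std p \<in> {b. set b \<subseteq> {..k} \<and> length b \<le> k}" using A1 A2 by blast
  moreover have "map run p \<in> {R. set R \<subseteq> {..changes cw} \<and> length R \<le> k}" using B1 B2 by blast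
  ultimately show "l \<in> LabSet k (changes cw)" unfolding LabSet_def e by blast
qed

end

lemma LabSet_mono: "B \<le> B' \<Longrightarrow> LabSet k B \<subseteq> LabSet k B'"
  unfolding LabSet_def by auto

theorem structure_thm:
  fixes pi :: "nat list"
  assumes k2: "2 \<le> k" and pp: "is_perm pi" and alK: "al pi < K" and sK: "s_k k pi < enat K"
  shows "\<exists>P. valid P \<and> map fst (pts P) = pi \<and> set (map plab P) \<subseteq> LabSet k (K * K * K)"
proof -
  have gc: "greedy_count (length pi) k pi < K" using sK k2 unfolding s_k_def by simp
  obtain segs where segs: "length segs = greedy_count (length pi) k pi" "concat segs = pi"
    "\<forall>s\<in>set segs. s \<noteq> [] \<and> std s \<in> H_plus k \<union> H_minus k"
    using greedy_segs[OF k2, of pi "length pi"] by blast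
  interpret S: segsetup pi segs using pp segs(2) by unfold_locales
  have ds: "distinct (segs ! i)" if "i < length segs" for i
    using S.split_at[OF that] S.dist by (metis distinct_append)
  define Q where "Q i x \<longleftrightarrow> (segs ! i = concat (fst x) \<and> (\<forall>p\<in>set (fst x). length p < k) \<and>
     sorted_wrt (\<lambda>p q. \<forall>x'\<in>set p. \<forall>y\<in>set q. x' \<noteq> y \<and> (x' < y) = snd x) (fst x))" for i x
  have ex: "\<forall>i. \<exists>x. i < length segs \<longrightarrow> Q i x"
  proof
    fix i
    show "\<exists>x. i < length segs \<longrightarrow> Q i x"
    proof (cases "i < length segs")
      case True
      then have "std (segs ! i) \<in> H_plus k \<union> H_minus k" using segs(3) by simp
      then obtain ps sg where "segs ! i = concat ps" "\<forall>p\<in>set ps. length p < k"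
        "sorted_wrt (\<lambda>p q. \<forall>x\<in>set p. \<forall>y\<in>set q. x \<noteq> y \<and> (x < y) = sg) ps"
        using seg_pieces[OF ds[OF True]] by blast
      then have "Q i (ps, sg)" unfolding Q_def by simp
      then show ?thesis by blast
    next
      case False then show ?thesis by blast
    qed
  qed
  obtain F where F: "\<forall>i. i < length segs \<longrightarrow> Q i (F i)"
    using choice[OF ex] by blast
  have F1: "segs ! i = concat (fst (F i))" if "i < length segs" for i
    using F that unfolding Q_def by blast
  have F2: "length p < k" if "i < length segs" "p \<in> set (fst (F i))" for i p
    using F that unfolding Q_def by blast
  have F3: "sorted_wrt (\<lambda>p q. \<forall>x'\<in>set p. \<forall>y\<in>set q. x' \<noteq> y \<and> (x' < y) = snd (F i)) (fst (F i))"
    if "i < length segs" for i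
    using F that unfolding Q_def by blast
  interpret T: segsetup2 pi segs "\<lambda>i. fst (F i)" "\<lambda>i. snd (F i)" k
    by unfold_locales (rule F1, assumption, rule F2, assumption+, rule F3, assumption)
  have cb: "changes S.cw \<le> K * K * K" using S.changes_bound alK gc segs(1) by simp
  have "set (map plab T.PP) \<subseteq> LabSet k (K * K * K)"
    using T.labels_PP LabSet_mono[OF cb] by blast
  then show ?thesis using T.valid_PP T.fst_pts_PP by blast
qed


lemma contains_same_length_eq:
  assumes "is_perm a" "is_perm b" "a \<prec> b" "length a = length b"
  shows "a = b"
proof -
  obtain ys where ys: "subseq ys b" "order_iso a ys" using assms(3) unfolding contains_def by blast
  then have "length ys = length b" using assms(4) unfolding order_iso_def by simp
  then have "ys = b" using ys(1) subseq_same_length by blast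
  then show ?thesis using perm_order_iso_eq assms ys by simp
qed

theorem mainTheorem7:
  fixes k K :: nat
  shows "wpo_on (\<prec>) {\<pi>. is_perm \<pi> \<and> al \<pi> < K \<and> s_k k \<pi> < enat K}"
proof -
  let ?A = "{\<pi>. is_perm \<pi> \<and> al \<pi> < K \<and> s_k k \<pi> < enat K}"
  have 1: "\<forall>x\<in>?A. x \<prec> x" using contains_refl by blast
  have 2: "\<forall>x\<in>?A. \<forall>y\<in>?A. x \<prec> y \<and> y \<prec> x \<longrightarrow> x = y" using contains_perm_antisym by blast
  have 3: "\<forall>x\<in>?A. \<forall>y\<in>?A. \<forall>z\<in>?A. x \<prec> y \<and> y \<prec> z \<longrightarrow> x \<prec> z" using contains_trans by blast
  have 4: "\<not> (\<exists>f :: nat \<Rightarrow> nat list. \<forall>i. f i \<in> ?A \<and> f (Suc i) \<prec> f i \<and> f (Suc i) \<noteq> f i)"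
  proof
    assume "\<exists>f :: nat \<Rightarrow> nat list. \<forall>i. f i \<in> ?A \<and> f (Suc i) \<prec> f i \<and> f (Suc i) \<noteq> f i"
    then obtain f :: "nat \<Rightarrow> nat list" where f: "\<forall>i. f i \<in> ?A \<and> f (Suc i) \<prec> f i \<and> f (Suc i) \<noteq> f i"
      by blast
    have dec: "length (f (Suc i)) < length (f i)" for i
    proof -
      have a: "f (Suc i) \<prec> f i" "f (Suc i) \<noteq> f i" "is_perm (f i)" "is_perm (f (Suc i))"
        using f by auto
      have "length (f (Suc i)) \<le> length (f i)" using contains_length[OF a(1)] .
      moreover have "length (f (Suc i)) \<noteq> length (f i)"
        using contains_same_length_eq[OF a(4) a(3) a(1)] a(2) by blast
      ultimately show ?thesis by simp
    qed
    have "length (f i) + i \<le> length (f 0)" for i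
    proof (induction i)
      case 0 then show ?case by simp
    next
      case (Suc i) then show ?case using dec[of i] by simp
    qed
    then have "length (f (Suc (length (f 0)))) + Suc (length (f 0)) \<le> length (f 0)" .
    then show False by simp
  qed
  have 5: "\<not> (\<exists>f :: nat \<Rightarrow> nat list. (\<forall>i. f i \<in> ?A) \<and> inj f \<and> (\<forall>i j. i \<noteq> j \<longrightarrow> \<not> f i \<prec> f j))"
  proof
    assume "\<exists>f :: nat \<Rightarrow> nat list. (\<forall>i. f i \<in> ?A) \<and> inj f \<and> (\<forall>i j. i \<noteq> j \<longrightarrow> \<not> f i \<prec> f j)"
    then obtain f :: "nat \<Rightarrow> nat list" where fA: "\<forall>i. f i \<in> ?A" and anti: "\<forall>i j. i \<noteq> j \<longrightarrow> \<not> f i \<prec> f j"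
      by blast
    show False
    proof (cases "k < 2")
      case True
      then have "s_k k (f 0) = \<infinity>" unfolding s_k_def by simp
      moreover have "s_k k (f 0) < enat K" using fA by blast
      ultimately show False by simp
    next
      case False
      then have k2: "2 \<le> k" by simp
      define Q where "Q i P \<longleftrightarrow> valid P \<and> map fst (pts P) = f i \<and> set (map plab P) \<subseteq> LabSet k (K * K * K)"
        for i P
      have "\<forall>i. \<exists>P. Q i P"
      proof
        fix i
        have "is_perm (f i)" "al (f i) < K" "s_k k (f i) < enat K" using fA by auto
        then show "\<exists>P. Q i P" unfolding Q_def by (rule structure_thm[OF k2])
      qed
      then obtain Pf where Pf: "\<forall>i. Q i (Pf i)" by (rule choice[THEN exE])
      have Pv: "valid (Pf i)" and Pe: "map fst (pts (Pf i)) = f i"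
        and Pl: "set (map plab (Pf i)) \<subseteq> LabSet k (K * K * K)" for i
        using Pf unfolding Q_def by blast+
      have "\<exists>i j. i < j \<and> subseq (map plab (Pf i)) (map plab (Pf j))"
        by (rule higman_good[OF finite_LabSet]) (rule allI, rule Pl)
      then obtain i j where ij: "i < j" "subseq (map plab (Pf i)) (map plab (Pf j))" by blast
      have "map fst (pts (Pf i)) \<prec> map fst (pts (Pf j))"
        by (rule labels_contain[OF Pv Pv ij(2)])
      then have fij: "f i \<prec> f j" by (simp only: Pe)
      have "i \<noteq> j" using ij(1) by simp
      then have "\<not> f i \<prec> f j" using anti by blast
      then show False using fij by contradiction
    qed
  qed
  show ?thesis unfolding wpo_on_def by (rule conjI[OF 1 conjI[OF 2 conjI[OF 3 conjI[OF 4 5]]]])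
qed

end
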